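(* The centre $Z(F)$ of $F$ satisfies $Z(F)=K\oplus I$, where $K$ denotes the scalar matrices $K\cdot 1$ and $I$ is a nilpotent ideal of $F$ (not only of $Z(F)$).
   Context: $K$ is an infinite field of characteristic different from 2. Let $X=\{x_1,x_2,x_1',x_2'\}$ and $Y=\{y_1,y_2,y_1',y_2'\}$, and let $K[X;Y]\cong K[X]\otimes_K E(Y)$ be the free supercommutative algebra: the $x$'s are even commuting variables, the $y$'s are odd pairwise anticommuting variables, and $E(Y)$ is the Grassmann algebra on the vector space with basis $Y$. Put $C_1=\begin{pmatrix} x_1&y_1\\ y_1'&x_1'\end{pmatrix}$, $C_2=\begin{pmatrix} x_2&y_2\\ y_2'&x_2'\end{pmatrix}$, and let $F=K[C_1,C_2]$ be the unital $K$-subalgebra of $M_2(K[X;Y])$ generated by $C_1,C_2$; $F$ is isomorphic to the relatively free (generic) algebra of rank 2 of $M_{11}(E)$, where $E$ is the infinite dimensional Grassmann algebra and $M_{11}(E)$ is the algebra of $2\times 2$ matrices over $E$ with even diagonal and odd off-diagonal entries. *)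

theory Defs
  imports "HOL-Library.Poly_Mapping"
begin

text \<open>The free supercommutative algebra K[X;Y] = K[X] (x) E(Y).
  Even variables x_0,x_1,x_2,x_3 stand for x1,x2,x1',x2'; odd variables
  y_0,y_1,y_2,y_3 stand for y1,y2,y1',y2'.  An element is the coefficient
  function on basis monomials  x^m * y_S, where m is an exponent vector and
  S a finite set of odd indices, with y_S the product of the y_i, i in S,
  in increasing order.\<close>

type_synonym 'k sc = "(nat \<Rightarrow>\<^sub>0 nat) \<times> nat set \<Rightarrow> 'k"

definition sc_sign :: "nat set \<Rightarrow> nat set \<Rightarrow> 'k::field" where
  "sc_sign S T = (- 1) ^ card {(i, j). i \<in> S \<and> j \<in> T \<and> j < i}"

definition sc_add :: "'k::field sc \<Rightarrow> 'k sc \<Rightarrow> 'k sc" where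
  "sc_add a b = (\<lambda>u. a u + b u)"

definition sc_scale :: "'k::field \<Rightarrow> 'k sc \<Rightarrow> 'k sc" where
  "sc_scale c a = (\<lambda>u. c * a u)"

definition sc_mult :: "'k::field sc \<Rightarrow> 'k sc \<Rightarrow> 'k sc" where
  "sc_mult a b = (\<lambda>(m, S).
     \<Sum>(m1, m2) \<in> {(m1, m2). m1 + m2 = m}.
       \<Sum>(S1, S2) \<in> {(S1, S2). S1 \<union> S2 = S \<and> S1 \<inter> S2 = {}}.
         sc_sign S1 S2 * a (m1, S1) * b (m2, S2))"

definition sc_zero :: "'k::field sc" where
  "sc_zero = (\<lambda>_. 0)"

definition sc_one :: "'k::field sc" where
  "sc_one = (\<lambda>u. if u = (0, {}) then 1 else 0)"

definition xvar :: "nat \<Rightarrow> 'k::field sc" where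
  "xvar i = (\<lambda>u. if u = (Poly_Mapping.single i 1, {}) then 1 else 0)"

definition yvar :: "nat \<Rightarrow> 'k::field sc" where
  "yvar i = (\<lambda>u. if u = (0, {i}) then 1 else 0)"

datatype ix = R1 | R2

type_synonym 'k mat2 = "ix \<Rightarrow> ix \<Rightarrow> 'k sc"

definition madd :: "'k::field mat2 \<Rightarrow> 'k mat2 \<Rightarrow> 'k mat2" where
  "madd A B = (\<lambda>i j. sc_add (A i j) (B i j))"

definition mscale :: "'k::field \<Rightarrow> 'k mat2 \<Rightarrow> 'k mat2" where
  "mscale c A = (\<lambda>i j. sc_scale c (A i j))"

definition mmul :: "'k::field mat2 \<Rightarrow> 'k mat2 \<Rightarrow> 'k mat2" where
  "mmul A B = (\<lambda>i j. sc_add (sc_mult (A i R1) (B R1 j)) (sc_mult (A i R2) (B R2 j)))"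

definition mzero :: "'k::field mat2" where
  "mzero = (\<lambda>i j. sc_zero)"

definition mone :: "'k::field mat2" where
  "mone = (\<lambda>i j. if i = j then sc_one else sc_zero)"

definition mprod :: "'k::field mat2 list \<Rightarrow> 'k mat2" where
  "mprod xs = foldr mmul xs mone"

definition genmat :: "nat \<Rightarrow> nat \<Rightarrow> 'k::field mat2" where
  "genmat a b = (\<lambda>i j. case (i, j) of
      (R1, R1) \<Rightarrow> xvar a | (R1, R2) \<Rightarrow> yvar a
    | (R2, R1) \<Rightarrow> yvar b | (R2, R2) \<Rightarrow> xvar b)"

definition C1 :: "'k::field mat2" where "C1 = genmat 0 2"
definition C2 :: "'k::field mat2" where "C2 = genmat 1 3"

inductive_set Falg :: "'k::field mat2 set" where
  one: "mone \<in> Falg"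
| gen1: "C1 \<in> Falg"
| gen2: "C2 \<in> Falg"
| add: "A \<in> Falg \<Longrightarrow> B \<in> Falg \<Longrightarrow> madd A B \<in> Falg"
| scale: "A \<in> Falg \<Longrightarrow> mscale c A \<in> Falg"
| mul: "A \<in> Falg \<Longrightarrow> B \<in> Falg \<Longrightarrow> mmul A B \<in> Falg"

definition centreF :: "'k::field mat2 set" where
  "centreF = {Z \<in> Falg. \<forall>A \<in> Falg. mmul Z A = mmul A Z}"

definition ideal_of_F :: "'k::field mat2 set \<Rightarrow> bool" where
  "ideal_of_F I \<longleftrightarrow> I \<subseteq> Falg \<and> mzero \<in> I
     \<and> (\<forall>A \<in> I. \<forall>B \<in> I. madd A B \<in> I)
     \<and> (\<forall>c. \<forall>A \<in> I. mscale c A \<in> I)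
     \<and> (\<forall>A \<in> Falg. \<forall>B \<in> I. mmul A B \<in> I \<and> mmul B A \<in> I)"

definition nilpotent_set :: "'k::field mat2 set \<Rightarrow> bool" where
  "nilpotent_set I \<longleftrightarrow> (\<exists>n \<ge> 1. \<forall>xs. length xs = n \<and> set xs \<subseteq> I \<longrightarrow> mprod xs = mzero)"

end

theory Submission
  imports Defs
begin

type_synonym 'k pl = "(nat \<Rightarrow>\<^sub>0 nat) \<Rightarrow>\<^sub>0 'k"

definition good :: "'k::field sc \<Rightarrow> bool" where
 "good a \<longleftrightarrow> (\<forall>S. finite {m. a (m,S) \<noteq> 0}) \<and> (\<forall>m S. infinite S \<longrightarrow> a (m,S) = 0)"

definition cp :: "'k::field sc \<Rightarrow> nat set \<Rightarrow> 'k pl" where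
 "cp a S = Abs_poly_mapping (\<lambda>m. a (m,S))"

lemma lookup_comp: "good a \<Longrightarrow> Poly_Mapping.lookup (cp a S) m = a (m,S)"
proof -
  assume "good a"
  then have "finite {m. a(m,S) \<noteq> 0}" by (simp add: good_def)
  then show ?thesis unfolding cp_def by simp
qed

lemma fin_split: "finite {(m1,m2). m1 + m2 = (m::nat\<Rightarrow>\<^sub>0nat)}"
proof -
  let ?B = "{..sum (Poly_Mapping.lookup m) (Poly_Mapping.keys m)}"
  have fin: "finite {f. \<forall>x. (x \<in> Poly_Mapping.keys m \<longrightarrow> f x \<in> ?B) \<and> (x \<notin> Poly_Mapping.keys m \<longrightarrow> f x = 0)}"
    by (rule finite_set_of_finite_funs) auto
  have sub: "Poly_Mapping.lookup ` {m1. \<exists>m2. m1 + m2 = m} \<subseteq> {f. \<forall>x. (x \<in> Poly_Mapping.keys m \<longrightarrow> f x \<in> ?B) \<and> (x \<notin> Poly_Mapping.keys m \<longrightarrow> f x = 0)}"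
  proof (clarsimp, intro conjI allI impI)
    fix m1 m2 :: "nat \<Rightarrow>\<^sub>0 nat" and x assume x: "x \<in> Poly_Mapping.keys (m1 + m2)"
    have "Poly_Mapping.lookup m1 x \<le> Poly_Mapping.lookup (m1+m2) x" by (simp add: lookup_add)
    also have "\<dots> \<le> sum (Poly_Mapping.lookup (m1+m2)) (Poly_Mapping.keys (m1+m2))"
      using x by (intro member_le_sum) auto
    finally show "Poly_Mapping.lookup m1 x \<le> sum (Poly_Mapping.lookup (m1+m2)) (Poly_Mapping.keys (m1+m2))" .
  next
    fix m1 m2 :: "nat \<Rightarrow>\<^sub>0 nat" and x assume x: "x \<notin> Poly_Mapping.keys (m1 + m2)"
    then show "Poly_Mapping.lookup m1 x = 0" by (simp add: in_keys_iff lookup_add)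
  qed
  have inj: "inj_on Poly_Mapping.lookup {m1. \<exists>m2. m1 + m2 = m}"
    by (rule inj_onI) (simp add: poly_mapping_eqI)
  have f1: "finite {m1. \<exists>m2. m1 + m2 = m}"
    using finite_imageD[OF finite_subset[OF sub fin] inj] .
  have "{(m1,m2). m1 + m2 = m} \<subseteq> (\<lambda>m1. (m1, m - m1)) ` {m1. \<exists>m2. m1 + m2 = m}"
    by (auto simp: image_iff)
  then show ?thesis using f1 finite_subset by blast
qed

lemma lookup_mult_fin:
  fixes f g :: "(nat \<Rightarrow>\<^sub>0 nat) \<Rightarrow> 'k::field"
  assumes "finite {x. f x \<noteq> 0}" "finite {x. g x \<noteq> 0}"
  shows "Poly_Mapping.lookup (Abs_poly_mapping f * Abs_poly_mapping g) m
        = (\<Sum>(m1,m2)\<in>{(m1,m2). m1 + m2 = m}. f m1 * g m2)"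
proof -
  have "Poly_Mapping.lookup (Abs_poly_mapping f * Abs_poly_mapping g) m = prod_fun f g m"
    using assms by (simp add: times_poly_mapping.rep_eq)
  also have "\<dots> = (\<Sum>(a, b). f a * g b when m = a + b)"
    using assms by (rule prod_fun_unfold_prod)
  also have "\<dots> = (\<Sum>x\<in>{(m1,m2). m1 + m2 = m}. (case x of (a,b) \<Rightarrow> f a * g b when m = a + b))"
    by (rule Sum_any.expand_superset) (auto simp: fin_split)
  also have "\<dots> = (\<Sum>(m1,m2)\<in>{(m1,m2). m1 + m2 = m}. f m1 * g m2)"
    by (rule sum.cong) auto
  finally show ?thesis .
qed

lemma lookup_comp_mult:
  assumes "good a" "good b"
  shows "Poly_Mapping.lookup (cp a S1 * cp b S2) m = (\<Sum>(m1,m2)\<in>{(m1,m2). m1 + m2 = m}. a (m1,S1) * b (m2,S2))"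
  unfolding cp_def using lookup_mult_fin[of "\<lambda>m. a(m,S1)" "\<lambda>m. b(m,S2)" m] assms by (simp add: good_def)

lemma decomp_eq: "{(S1, S2). S1 \<union> S2 = S \<and> S1 \<inter> S2 = {}} = (\<lambda>S1. (S1, S - S1)) ` Pow S"
  by (auto simp: image_iff)

lemma sc_mult_val:
  assumes "good a" "good b"
  shows "sc_mult a b (m,S) = (\<Sum>S1\<in>Pow S. sc_sign S1 (S - S1) * Poly_Mapping.lookup (cp a S1 * cp b (S - S1)) m)"
proof -
  have "sc_mult a b (m,S) = (\<Sum>(m1, m2) \<in> {(m1, m2). m1 + m2 = m}.
       \<Sum>(S1, S2) \<in> {(S1, S2). S1 \<union> S2 = S \<and> S1 \<inter> S2 = {}}.
         sc_sign S1 S2 * a (m1, S1) * b (m2, S2))"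
    by (simp add: sc_mult_def)
  also have "\<dots> = (\<Sum>(S1, S2) \<in> {(S1, S2). S1 \<union> S2 = S \<and> S1 \<inter> S2 = {}}.
       \<Sum>(m1, m2) \<in> {(m1, m2). m1 + m2 = m}. sc_sign S1 S2 * a (m1, S1) * b (m2, S2))"
    unfolding split_def by (rule sum.swap)
  also have "\<dots> = (\<Sum>S1 \<in> Pow S. \<Sum>(m1, m2) \<in> {(m1, m2). m1 + m2 = m}. sc_sign S1 (S - S1) * a (m1, S1) * b (m2, S - S1))"
    unfolding decomp_eq by (subst sum.reindex) (auto intro: inj_onI)
  also have "\<dots> = (\<Sum>S1\<in>Pow S. sc_sign S1 (S - S1) * Poly_Mapping.lookup (cp a S1 * cp b (S - S1)) m)"
    by (rule sum.cong[OF refl]) (simp add: lookup_comp_mult[OF assms] sum_distrib_left split_def mult.assoc)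
  finally show ?thesis .
qed

lemma sc_mult_inf:
  assumes "infinite S" shows "sc_mult a b (m,S) = 0"
proof -
  have "infinite {(S1, S2). S1 \<union> S2 = S \<and> S1 \<inter> S2 = {}}"
    unfolding decomp_eq using assms
    by (subst finite_image_iff) (auto intro: inj_onI)
  then show ?thesis by (simp add: sc_mult_def)
qed

lemma good_mult: assumes "good a" "good b" shows "good (sc_mult a b)"
  unfolding good_def
proof (intro conjI allI impI)
  fix S
  show "finite {m. sc_mult a b (m, S) \<noteq> 0}"
  proof (cases "finite S")
    case True
    have "{m. sc_mult a b (m, S) \<noteq> 0} \<subseteq> (\<Union>S1\<in>Pow S. Poly_Mapping.keys (cp a S1 * cp b (S - S1)))"
    proof
      fix m assume "m \<in> {m. sc_mult a b (m, S) \<noteq> 0}"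
      then have "(\<Sum>S1\<in>Pow S. sc_sign S1 (S - S1) * Poly_Mapping.lookup (cp a S1 * cp b (S - S1)) m) \<noteq> 0"
        by (simp add: sc_mult_val[OF assms])
      then obtain S1 where "S1 \<in> Pow S" "sc_sign S1 (S - S1) * Poly_Mapping.lookup (cp a S1 * cp b (S - S1)) m \<noteq> 0"
        using sum.not_neutral_contains_not_neutral by blast
      then show "m \<in> (\<Union>S1\<in>Pow S. Poly_Mapping.keys (cp a S1 * cp b (S - S1)))"
        by (auto simp: in_keys_iff)
    qed
    moreover have "finite (\<Union>S1\<in>Pow S. Poly_Mapping.keys (cp a S1 * cp b (S - S1)))" using True by auto
    ultimately show ?thesis by (rule finite_subset)
  next
    case False then show ?thesis by (simp add: sc_mult_inf)
  qed
next
  fix m S assume "infinite (S::nat set)" then show "sc_mult a b (m,S) = 0" by (rule sc_mult_inf)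
qed

definition cst :: "'k::field \<Rightarrow> 'k pl" where "cst c = Poly_Mapping.single 0 c"

lemma lookup_cst_mult: "Poly_Mapping.lookup (cst c * p) m = c * Poly_Mapping.lookup p m"
  unfolding cst_def by (simp flip: mult_map_scale_conv_mult add: map.rep_eq when_def)

lemma comp_mult:
  assumes "good a" "good b" "finite S"
  shows "cp (sc_mult a b) S = (\<Sum>S1\<in>Pow S. cst (sc_sign S1 (S - S1)) * (cp a S1 * cp b (S - S1)))"
  by (rule poly_mapping_eqI)
     (simp add: lookup_comp good_mult assms sc_mult_val lookup_sum lookup_cst_mult)


lemma good_add: "good a \<Longrightarrow> good b \<Longrightarrow> good (sc_add a b)"
  unfolding good_def sc_add_def
proof (intro conjI allI impI, goal_cases)
  case (1 S)
  have "{m. a (m, S) + b (m, S) \<noteq> 0} \<subseteq> {m. a (m, S) \<noteq> 0} \<union> {m. b (m, S) \<noteq> 0}" by auto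
  then show ?case using 1 by (meson finite_Un finite_subset)
next
  case (2 m S) then show ?case by simp
qed

lemma good_scale: "good a \<Longrightarrow> good (sc_scale c a)"
  unfolding good_def sc_scale_def
proof (intro conjI allI impI, goal_cases)
  case (1 S)
  have "{m. c * a (m, S) \<noteq> 0} \<subseteq> {m. a (m, S) \<noteq> 0}" by auto
  then show ?case using 1 by (meson finite_subset)
next
  case (2 m S) then show ?case by simp
qed

lemma good_zero: "good sc_zero" by (simp add: good_def sc_zero_def)
lemma good_one: "good sc_one" by (simp add: good_def sc_one_def)
lemma good_xvar: "good (xvar i)"
proof -
  have "\<And>S. {m. (m, S) = (Poly_Mapping.single i 1, {})} \<subseteq> {Poly_Mapping.single i 1}" by auto
  then show ?thesis by (auto simp: good_def xvar_def intro: finite_subset)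
qed
lemma good_yvar: "good (yvar i)"
proof -
  have "\<And>S. {m. (m, S) = (0, {i})} \<subseteq> {0}" by auto
  then show ?thesis by (auto simp: good_def yvar_def intro: finite_subset)
qed

lemma cp_add: "good a \<Longrightarrow> good b \<Longrightarrow> cp (sc_add a b) S = cp a S + cp b S"
  by (rule poly_mapping_eqI) (simp add: lookup_comp[OF good_add] lookup_comp lookup_add, simp add: sc_add_def)
lemma cp_scale: "good a \<Longrightarrow> cp (sc_scale c a) S = cst c * cp a S"
  by (rule poly_mapping_eqI) (simp add: lookup_comp[OF good_scale] lookup_comp lookup_cst_mult, simp add: sc_scale_def)
lemma cp_zero: "cp sc_zero S = 0"
  by (rule poly_mapping_eqI) (simp add: lookup_comp[OF good_zero], simp add: sc_zero_def)
lemma cp_one: "cp sc_one S = (if S = {} then 1 else 0)"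
  by (rule poly_mapping_eqI) (simp add: lookup_comp[OF good_one], auto simp: sc_one_def lookup_one when_def)

definition X :: "nat \<Rightarrow> 'k::field pl" where "X i = Poly_Mapping.single (Poly_Mapping.single i 1) 1"

lemma cp_xvar: "cp (xvar i) S = (if S = {} then X i else 0)"
  by (rule poly_mapping_eqI) (simp add: lookup_comp[OF good_xvar], auto simp: xvar_def X_def lookup_single when_def)
lemma cp_yvar: "cp (yvar i) S = (if S = {i} then 1 else 0)"
  by (rule poly_mapping_eqI) (simp add: lookup_comp[OF good_yvar], auto simp: yvar_def lookup_one when_def)

lemma good_ext:
  assumes "good a" "good b" "\<And>S. finite S \<Longrightarrow> cp a S = cp b S"
  shows "a = b"
proof (rule ext, clarify)
  fix m S
  show "a (m,S) = b (m,S)"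
  proof (cases "finite S")
    case True
    then show ?thesis using assms lookup_comp by metis
  next
    case False then show ?thesis using assms(1,2) by (simp add: good_def)
  qed
qed

lemma cst_mult: "cst (x * y) = cst x * cst y"
  by (simp add: cst_def mult_single)
lemma cst_1: "cst 1 = 1" by (simp add: cst_def)
lemma cst_0: "cst 0 = 0" by (simp add: cst_def)
lemma cst_add: "cst (x + y) = cst x + cst y" by (simp add: cst_def single_add)
lemma cst_uminus: "cst (- x) = - cst x" by (simp add: cst_def single_uminus)

lemma inv_union:
  assumes "T \<inter> U = {}"
  shows "{(i, j). i \<in> T \<union> U \<and> j \<in> W \<and> j < (i::nat)}
        = {(i, j). i \<in> T \<and> j \<in> W \<and> j < i} \<union> {(i, j). i \<in> U \<and> j \<in> W \<and> j < i}"
  by auto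

lemma inv_union2:
  shows "{(i, j). i \<in> T \<and> j \<in> U \<union> W \<and> j < (i::nat)}
        = {(i, j). i \<in> T \<and> j \<in> U \<and> j < i} \<union> {(i, j). i \<in> T \<and> j \<in> W \<and> j < i}"
  by auto

lemma fin_inv: "finite T \<Longrightarrow> finite {(i, j). i \<in> T \<and> j \<in> U \<and> j < (i::nat)}"
proof -
  assume "finite T"
  have "{(i, j). i \<in> T \<and> j \<in> U \<and> j < i} \<subseteq> T \<times> {..Max (insert 0 T)}"
    using \<open>finite T\<close> by auto (meson Max_ge finite_insert insertCI less_imp_le_nat order.trans)
  then show ?thesis using \<open>finite T\<close> by (meson finite_SigmaI finite_atMost finite_subset)
qed

lemma sign_cocycle:
  assumes "finite T" "finite U" "finite W" "T \<inter> U = {}" "T \<inter> W = {}" "U \<inter> W = {}"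
  shows "(sc_sign (T \<union> U) W :: 'k::field) * sc_sign T U = sc_sign T (U \<union> W) * sc_sign U W"
proof -
  have c1: "card {(i, j). i \<in> T \<union> U \<and> j \<in> W \<and> j < (i::nat)}
     = card {(i, j). i \<in> T \<and> j \<in> W \<and> j < i} + card {(i, j). i \<in> U \<and> j \<in> W \<and> j < i}"
    unfolding inv_union[OF assms(4)] using assms by (intro card_Un_disjoint fin_inv) auto
  have c2: "card {(i, j). i \<in> T \<and> j \<in> U \<union> W \<and> j < (i::nat)}
     = card {(i, j). i \<in> T \<and> j \<in> U \<and> j < i} + card {(i, j). i \<in> T \<and> j \<in> W \<and> j < i}"
    unfolding inv_union2 using assms by (intro card_Un_disjoint fin_inv) auto
  show ?thesis unfolding sc_sign_def c1 c2 power_add by (simp add: algebra_simps)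
qed

lemma sc_assoc:
  fixes a b c :: "'k::field sc"
  assumes a: "good a" and b: "good b" and c: "good c"
  shows "sc_mult (sc_mult a b) c = sc_mult a (sc_mult b c)"
proof (rule good_ext)
  show "good (sc_mult (sc_mult a b) c)" "good (sc_mult a (sc_mult b c))"
    by (simp_all add: good_mult assms)
  fix S :: "nat set" assume S: "finite S"
  let ?H = "\<lambda>S1 T. cst (sc_sign S1 (S - S1) * sc_sign T (S1 - T)) * (cp a T * cp b (S1 - T) * cp c (S - S1))"
  let ?G = "\<lambda>T U W. cst (sc_sign T (U \<union> W) * sc_sign U W) * (cp a T * cp b U * cp c W)"
  have "cp (sc_mult (sc_mult a b) c) S
      = (\<Sum>S1\<in>Pow S. \<Sum>T\<in>Pow S1. ?H S1 T)"
    using S by (simp add: comp_mult good_mult assms finite_subset sum_distrib_left sum_distrib_right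
        cst_mult algebra_simps)
  also have "\<dots> = (\<Sum>(S1,T)\<in>Sigma (Pow S) Pow. ?H S1 T)"
    by (rule sum.Sigma) (use S in \<open>auto intro: finite_subset\<close>)
  also have "\<dots> = (\<Sum>(T,U)\<in>Sigma (Pow S) (\<lambda>T. Pow (S - T)). ?H (T \<union> U) T)"
    by (rule sum.reindex_bij_witness[where i="\<lambda>(T,U). (T \<union> U, T)" and j="\<lambda>(S1,T). (T, S1 - T)"])
       (auto simp: Un_absorb1 Un_absorb2 Un_Diff_cancel)
  also have "\<dots> = (\<Sum>(T,U)\<in>Sigma (Pow S) (\<lambda>T. Pow (S - T)). ?G T U (S - T - U))"
  proof (rule sum.cong[OF refl], clarify)
    fix T U assume TU: "T \<subseteq> S" "U \<subseteq> S - T"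
    then have "sc_sign (T \<union> U) (S - T - U) * sc_sign T U = (sc_sign T (U \<union> (S - T - U)) * sc_sign U (S - T - U) :: 'k)"
      using S by (intro sign_cocycle) (auto intro: finite_subset)
    moreover have "T \<union> U - T = U" "S - (T \<union> U) = S - T - U" using TU by auto
    ultimately show "?H (T \<union> U) T = ?G T U (S - T - U)" by (simp add: algebra_simps)
  qed
  also have "\<dots> = (\<Sum>T\<in>Pow S. \<Sum>U\<in>Pow (S - T). ?G T U (S - T - U))"
    by (rule sum.Sigma[symmetric]) (use S in \<open>auto intro: finite_subset\<close>)
  also have "\<dots> = cp (sc_mult a (sc_mult b c)) S"
  proof -
    have e: "\<And>T. T \<subseteq> S \<Longrightarrow> U \<subseteq> S - T \<Longrightarrow> U \<union> (S - T - U) = S - T" for U by auto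
    show ?thesis using S
      by (auto simp: comp_mult good_mult assms finite_subset sum_distrib_left sum_distrib_right
        cst_mult algebra_simps Un_absorb1 intro!: sum.cong)
  qed
  finally show "cp (sc_mult (sc_mult a b) c) S = cp (sc_mult a (sc_mult b c)) S" .
qed


lemma sc_distL:
  assumes "good a" "good b" "good c"
  shows "sc_mult (sc_add a b) c = sc_add (sc_mult a c) (sc_mult b c)"
  by (rule good_ext) (simp_all add: assms good_mult good_add cp_add comp_mult finite_subset
      sum.distrib[symmetric] algebra_simps)

lemma sc_distR:
  assumes "good a" "good b" "good c"
  shows "sc_mult a (sc_add b c) = sc_add (sc_mult a b) (sc_mult a c)"
  by (rule good_ext) (simp_all add: assms good_mult good_add cp_add comp_mult finite_subset
      sum.distrib[symmetric] algebra_simps)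

lemma sc_scaleL:
  assumes "good a" "good b"
  shows "sc_mult (sc_scale k a) b = sc_scale k (sc_mult a b)"
  by (rule good_ext) (simp_all add: assms good_mult good_scale cp_scale comp_mult finite_subset
      sum_distrib_left algebra_simps)

lemma sc_scaleR:
  assumes "good a" "good b"
  shows "sc_mult a (sc_scale k b) = sc_scale k (sc_mult a b)"
  by (rule good_ext) (simp_all add: assms good_mult good_scale cp_scale comp_mult finite_subset
      sum_distrib_left algebra_simps)

lemma sign_empty1: "sc_sign {} S = 1" by (simp add: sc_sign_def)
lemma sign_empty2: "sc_sign S {} = 1" by (simp add: sc_sign_def)

lemma sc_oneL:
  assumes "good a" shows "sc_mult sc_one a = a"
proof (rule good_ext)
  show "good (sc_mult sc_one a)" by (simp add: good_mult good_one assms)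
  show "good a" by fact
  fix S :: "nat set" assume S: "finite S"
  have "cp (sc_mult sc_one a) S = (\<Sum>S1\<in>Pow S. cst (sc_sign S1 (S - S1)) * (cp sc_one S1 * cp a (S - S1)))"
    using S by (simp add: comp_mult good_one assms)
  also have "\<dots> = (\<Sum>S1\<in>Pow S. if S1 = {} then cp a S else 0)"
    by (rule sum.cong[OF refl]) (auto simp: cp_one sign_empty1 cst_1)
  also have "\<dots> = cp a S" using S by (simp add: sum.delta)
  finally show "cp (sc_mult sc_one a) S = cp a S" .
qed

lemma sc_oneR:
  assumes "good a" shows "sc_mult a sc_one = a"
proof (rule good_ext)
  show "good (sc_mult a sc_one)" by (simp add: good_mult good_one assms)
  show "good a" by fact
  fix S :: "nat set" assume S: "finite S"
  have "cp (sc_mult a sc_one) S = (\<Sum>S1\<in>Pow S. cst (sc_sign S1 (S - S1)) * (cp a S1 * cp sc_one (S - S1)))"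
    using S by (simp add: comp_mult good_one assms)
  also have "\<dots> = (\<Sum>S1\<in>Pow S. if S1 = S then cp a S else 0)"
    by (rule sum.cong[OF refl]) (auto simp: cp_one sign_empty2 cst_1)
  also have "\<dots> = cp a S" using S by (simp add: sum.delta)
  finally show "cp (sc_mult a sc_one) S = cp a S" .
qed

lemma sc_zeroL: "good a \<Longrightarrow> sc_mult sc_zero a = sc_zero"
  by (simp add: sc_mult_def sc_zero_def fun_eq_iff)
lemma sc_zeroR: "good a \<Longrightarrow> sc_mult a sc_zero = sc_zero"
  by (simp add: sc_mult_def sc_zero_def fun_eq_iff)

definition goodM :: "'k::field mat2 \<Rightarrow> bool" where "goodM A \<longleftrightarrow> (\<forall>i j. good (A i j))"

lemma goodM_add: "goodM A \<Longrightarrow> goodM B \<Longrightarrow> goodM (madd A B)"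
  by (simp add: goodM_def madd_def good_add)
lemma goodM_scale: "goodM A \<Longrightarrow> goodM (mscale c A)"
  by (simp add: goodM_def mscale_def good_scale)
lemma goodM_mul: "goodM A \<Longrightarrow> goodM B \<Longrightarrow> goodM (mmul A B)"
  by (simp add: goodM_def mmul_def good_add good_mult)
lemma goodM_one: "goodM mone" by (simp add: goodM_def mone_def good_one good_zero)
lemma goodM_zero: "goodM mzero" by (simp add: goodM_def mzero_def good_zero)
lemma goodM_gen: "goodM (genmat a b)"
  by (auto simp: goodM_def genmat_def good_xvar good_yvar split: ix.split)
lemma goodM_C1: "goodM C1" by (simp add: C1_def goodM_gen)
lemma goodM_C2: "goodM C2" by (simp add: C2_def goodM_gen)

lemma Falg_good: "A \<in> Falg \<Longrightarrow> goodM A"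
  by (induction rule: Falg.induct)
     (auto simp: goodM_one goodM_C1 goodM_C2 goodM_add goodM_scale goodM_mul)

lemma sc_add_swap: "sc_add (sc_add a b) (sc_add c d) = sc_add (sc_add a c) (sc_add b d)"
  by (simp add: sc_add_def fun_eq_iff algebra_simps)

lemma mmul_assoc:
  assumes "goodM A" "goodM B" "goodM C"
  shows "mmul (mmul A B) C = mmul A (mmul B C)"
  using assms unfolding goodM_def
  by (simp add: mmul_def fun_eq_iff[of "\<lambda>i j. _"] sc_distL sc_distR good_mult good_add sc_assoc;
      simp add: sc_add_def algebra_simps)

lemma mmul_addL:
  assumes "goodM A" "goodM B" "goodM C"
  shows "mmul (madd A B) C = madd (mmul A C) (mmul B C)"
  using assms unfolding goodM_def
  by (simp add: mmul_def madd_def sc_distL; simp add: sc_add_def fun_eq_iff algebra_simps)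

lemma mmul_addR:
  assumes "goodM A" "goodM B" "goodM C"
  shows "mmul A (madd B C) = madd (mmul A B) (mmul A C)"
  using assms unfolding goodM_def
  by (simp add: mmul_def madd_def sc_distR; simp add: sc_add_def fun_eq_iff algebra_simps)

lemma mmul_scaleL:
  assumes "goodM A" "goodM B"
  shows "mmul (mscale c A) B = mscale c (mmul A B)"
  using assms unfolding goodM_def
  by (simp add: mmul_def mscale_def sc_scaleL; simp add: sc_add_def sc_scale_def fun_eq_iff algebra_simps)

lemma mmul_scaleR:
  assumes "goodM A" "goodM B"
  shows "mmul A (mscale c B) = mscale c (mmul A B)"
  using assms unfolding goodM_def
  by (simp add: mmul_def mscale_def sc_scaleR; simp add: sc_add_def sc_scale_def fun_eq_iff algebra_simps)

lemma sc_add_zeroL: "sc_add sc_zero a = a" by (simp add: sc_add_def sc_zero_def)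
lemma sc_add_zeroR: "sc_add a sc_zero = a" by (simp add: sc_add_def sc_zero_def)

lemma mmul_oneL:
  assumes "goodM A" shows "mmul mone A = A"
proof (rule ext, rule ext)
  fix i j show "mmul mone A i j = A i j"
    using assms unfolding goodM_def
    by (cases i; cases j; simp add: mmul_def mone_def sc_oneL sc_zeroL sc_add_zeroL sc_add_zeroR)
qed

lemma mmul_oneR:
  assumes "goodM A" shows "mmul A mone = A"
proof (rule ext, rule ext)
  fix i j show "mmul A mone i j = A i j"
    using assms unfolding goodM_def
    by (cases i; cases j; simp add: mmul_def mone_def sc_oneR sc_zeroR sc_add_zeroL sc_add_zeroR)
qed


definition wt :: "nat set \<Rightarrow> int" where
  "wt S = int (card (S \<inter> {0,1})) - int (card (S \<inter> {2,3}))"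

fun ew :: "ix \<Rightarrow> ix \<Rightarrow> int" where
  "ew R1 R1 = 0" | "ew R2 R2 = 0" | "ew R1 R2 = 1" | "ew R2 R1 = -1"

definition shapeM :: "'k::field mat2 \<Rightarrow> bool" where
  "shapeM A \<longleftrightarrow> goodM A \<and> (\<forall>i j S. finite S \<longrightarrow> \<not>(S \<subseteq> {0,1,2,3} \<and> wt S = ew i j) \<longrightarrow> cp (A i j) S = 0)"

lemma shape_zero: "shapeM A \<Longrightarrow> finite S \<Longrightarrow> \<not>(S \<subseteq> {0,1,2,3} \<and> wt S = ew i j) \<Longrightarrow> cp (A i j) S = 0"
  by (simp add: shapeM_def)

lemma wt_split: "finite S \<Longrightarrow> S1 \<subseteq> S \<Longrightarrow> wt S = wt S1 + wt (S - S1)"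
proof -
  assume S: "finite S" "S1 \<subseteq> S"
  have "card (S \<inter> A) = card (S1 \<inter> A) + card ((S - S1) \<inter> A)" for A
  proof -
    have "S \<inter> A = (S1 \<inter> A) \<union> ((S - S1) \<inter> A)" using S by auto
    then show ?thesis using S by (metis Diff_disjoint card_Un_disjoint finite_Diff finite_Int inf_commute inf_left_commute finite_subset Int_Diff Diff_Int_distrib2)
  qed
  then show ?thesis by (simp add: wt_def)
qed

lemma ew_add: "ew i k + ew k j = ew i j"
  by (cases i; cases j; cases k; simp)

lemma cp_mmul:
  assumes "goodM A" "goodM B" "finite S"
  shows "cp (mmul A B i j) S = (\<Sum>S1\<in>Pow S. cst (sc_sign S1 (S - S1)) *
     (cp (A i R1) S1 * cp (B R1 j) (S - S1) + cp (A i R2) S1 * cp (B R2 j) (S - S1)))"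
  using assms unfolding goodM_def mmul_def
  by (simp add: cp_add good_mult comp_mult sum.distrib[symmetric] algebra_simps)

lemma shapeM_mul:
  assumes A: "shapeM A" and B: "shapeM B"
  shows "shapeM (mmul A B)"
  unfolding shapeM_def
proof (intro conjI allI impI)
  have gA: "goodM A" and gB: "goodM B" using A B by (auto simp: shapeM_def)
  then show "goodM (mmul A B)" by (rule goodM_mul)
  fix i j S assume S: "finite (S::nat set)" and bad: "\<not> (S \<subseteq> {0, 1, 2, 3} \<and> wt S = ew i j)"
  have z: "cp (A i k) S1 * cp (B k j) (S - S1) = 0" if S1: "S1 \<subseteq> S" for k S1
  proof (cases "S1 \<subseteq> {0,1,2,3} \<and> wt S1 = ew i k")
    case True
    have "\<not> (S - S1 \<subseteq> {0,1,2,3} \<and> wt (S - S1) = ew k j)"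
      using bad True wt_split[OF S S1] ew_add[of i k j] by auto
    then have "cp (B k j) (S - S1) = 0" using B S by (intro shape_zero) auto
    then show ?thesis by simp
  next
    case False
    then have "cp (A i k) S1 = 0" using A S S1 finite_subset by (intro shape_zero) auto
    then show ?thesis by simp
  qed
  show "cp (mmul A B i j) S = 0"
    unfolding cp_mmul[OF gA gB S] by (rule sum.neutral) (simp add: z)
qed

lemma shapeM_add: "shapeM A \<Longrightarrow> shapeM B \<Longrightarrow> shapeM (madd A B)"
  unfolding shapeM_def by (auto simp: goodM_add madd_def cp_add goodM_def good_add)

lemma shapeM_scale: "shapeM A \<Longrightarrow> shapeM (mscale c A)"
  unfolding shapeM_def by (auto simp: goodM_scale mscale_def cp_scale goodM_def good_scale)

lemma wt_empty: "wt {} = 0" by (simp add: wt_def)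

lemma shapeM_one: "shapeM mone"
  unfolding shapeM_def
proof (intro conjI goodM_one allI impI)
  fix i j S assume "finite (S::nat set)" "\<not> (S \<subseteq> {0, 1, 2, 3} \<and> wt S = ew i j)"
  then show "cp (mone i j) S = 0" by (cases i; cases j; auto simp: mone_def cp_one cp_zero wt_empty)
qed

lemma shapeM_gen: "shapeM (genmat a b)" if "a \<in> {0,1}" "b = a + 2"
  unfolding shapeM_def
proof (intro conjI goodM_gen allI impI)
  fix i j S assume "finite (S::nat set)" "\<not> (S \<subseteq> {0, 1, 2, 3} \<and> wt S = ew i j)"
  then show "cp (genmat a b i j) S = 0" using that
    by (cases i; cases j; auto simp: genmat_def cp_xvar cp_yvar wt_def)
qed

lemma shapeM_C1: "shapeM C1" by (simp add: C1_def shapeM_gen)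
lemma shapeM_C2: "shapeM C2" by (simp add: C2_def shapeM_gen)

lemma Falg_shape: "A \<in> Falg \<Longrightarrow> shapeM A"
  by (induction rule: Falg.induct)
     (auto simp: shapeM_one shapeM_C1 shapeM_C2 shapeM_add shapeM_scale shapeM_mul)


lemma sign_single: "sc_sign {a} {b} = (if b < a then -1 else 1)"
proof -
  have "{(i, j). i \<in> {a} \<and> j \<in> {b} \<and> j < (i::nat)} = (if b < a then {(a,b)} else {})" by auto
  then show ?thesis by (simp add: sc_sign_def)
qed

lemma sign_insertL:
  assumes "a \<notin> S" "finite S"
  shows "sc_sign (insert a S) T = sc_sign {a} T * sc_sign S T"
proof -
  have d: "{a} \<inter> S = {}" using assms by auto
  have "card {(i, j). i \<in> {a} \<union> S \<and> j \<in> T \<and> j < (i::nat)}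
     = card {(i, j). i \<in> {a} \<and> j \<in> T \<and> j < i} + card {(i, j). i \<in> S \<and> j \<in> T \<and> j < i}"
    unfolding inv_union[OF d] using assms by (intro card_Un_disjoint fin_inv) auto
  then show ?thesis by (simp add: sc_sign_def power_add)
qed

lemma sign_insertR:
  assumes "b \<notin> T" "finite S"
  shows "sc_sign S (insert b T) = sc_sign S {b} * sc_sign S T"
proof -
  have "card {(i, j). i \<in> S \<and> j \<in> {b} \<union> T \<and> j < (i::nat)}
     = card {(i, j). i \<in> S \<and> j \<in> {b} \<and> j < i} + card {(i, j). i \<in> S \<and> j \<in> T \<and> j < i}"
    unfolding inv_union2[of S "{b}" T] using assms by (intro card_Un_disjoint fin_inv) auto
  then show ?thesis by (simp add: sc_sign_def power_add)
qed

definition gg :: "'k::field mat2 \<Rightarrow> 'k pl" where "gg A = cp (A R1 R1) {}"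
definition hh :: "'k::field mat2 \<Rightarrow> 'k pl" where "hh A = cp (A R2 R2) {}"
definition pp :: "'k::field mat2 \<Rightarrow> nat \<Rightarrow> 'k pl" where "pp A i = cp (A R1 R2) {i}"
definition qq :: "'k::field mat2 \<Rightarrow> nat \<Rightarrow> 'k pl" where "qq A j = cp (A R2 R1) {j}"
definition al :: "'k::field mat2 \<Rightarrow> nat \<Rightarrow> nat \<Rightarrow> 'k pl" where "al A i j = cp (A R1 R1) {i,j}"
definition de :: "'k::field mat2 \<Rightarrow> nat \<Rightarrow> nat \<Rightarrow> 'k pl" where "de A i j = cp (A R2 R2) {i,j}"

lemmas sgn_simps = sign_single sign_insertL sign_insertR sign_empty1 sign_empty2

lemma Pow_simps: "Pow {} = {{}}" "Pow (insert a A) = Pow A \<union> insert a ` Pow A"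
  by (auto simp: Pow_insert)

context
  fixes A B :: "'k::field mat2"
  assumes A: "shapeM A" and B: "shapeM B"
begin

lemma gA: "goodM A" and gB: "goodM B" using A B by (auto simp: shapeM_def)

lemmas zA = shape_zero[OF A] and zB = shape_zero[OF B]

lemma gg_mul: "gg (mmul A B) = gg A * gg B"
  unfolding gg_def by (simp add: cp_mmul[OF gA gB] sgn_simps cst_1 cst_uminus zA[of "{}" R1 R2] wt_empty)

lemma hh_mul: "hh (mmul A B) = hh A * hh B"
  unfolding hh_def by (simp add: cp_mmul[OF gA gB] sgn_simps cst_1 cst_uminus zA[of "{}" R2 R1] wt_empty)

lemma pp_mul: "i \<in> {0,1} \<Longrightarrow> pp (mmul A B) i = gg A * pp B i + pp A i * hh B"
  unfolding gg_def hh_def pp_def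
  by (elim insertE; simp add: cp_mmul[OF gA gB] Pow_simps insert_Diff_if sgn_simps cst_1 cst_uminus zA zB wt_def)

lemma qq_mul: "j \<in> {2,3} \<Longrightarrow> qq (mmul A B) j = qq A j * gg B + hh A * qq B j"
  unfolding gg_def hh_def qq_def
  by (elim insertE; simp add: cp_mmul[OF gA gB] Pow_simps insert_Diff_if sgn_simps cst_1 cst_uminus zA zB wt_def)

lemma al_mul: "i \<in> {0,1} \<Longrightarrow> j \<in> {2,3} \<Longrightarrow>
   al (mmul A B) i j = gg A * al B i j + al A i j * gg B + pp A i * qq B j"
  unfolding gg_def al_def pp_def qq_def
  apply (subgoal_tac "(i=0 \<or> i=1) \<and> (j=2 \<or> j=3)")
   apply (elim conjE disjE; simp add: cp_mmul[OF gA gB] Pow_simps insert_Diff_if sgn_simps cst_1 cst_uminus zA zB wt_def)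
  by auto

lemma de_mul: "i \<in> {0,1} \<Longrightarrow> j \<in> {2,3} \<Longrightarrow>
   de (mmul A B) i j = hh A * de B i j + de A i j * hh B - qq A j * pp B i"
  unfolding hh_def de_def pp_def qq_def
  apply (subgoal_tac "(i=0 \<or> i=1) \<and> (j=2 \<or> j=3)")
   apply (elim conjE disjE; simp add: cp_mmul[OF gA gB] Pow_simps insert_Diff_if sgn_simps cst_1 cst_uminus zA zB wt_def)
  by auto

end


definition pd :: "nat \<Rightarrow> 'k::field pl \<Rightarrow> 'k pl" where
  "pd v p = Abs_poly_mapping (\<lambda>m. of_nat (Poly_Mapping.lookup m v + 1) * Poly_Mapping.lookup p (m + Poly_Mapping.single v 1))"

lemma pd_fin: "finite {m. of_nat (Poly_Mapping.lookup m v + 1) * Poly_Mapping.lookup p (m + Poly_Mapping.single v 1) \<noteq> (0::'k::field)}"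
proof -
  have "{m. of_nat (Poly_Mapping.lookup m v + 1) * Poly_Mapping.lookup p (m + Poly_Mapping.single v 1) \<noteq> (0::'k)}
     \<subseteq> (\<lambda>m. m + Poly_Mapping.single v 1) -` Poly_Mapping.keys p"
    by (auto simp: in_keys_iff)
  moreover have "finite ((\<lambda>m. m + Poly_Mapping.single v (1::nat)) -` Poly_Mapping.keys p)"
    by (rule finite_vimageI) (auto intro: inj_onI)
  ultimately show ?thesis by (rule finite_subset)
qed

lemma lookup_pd: "Poly_Mapping.lookup (pd v p) m = of_nat (Poly_Mapping.lookup m v + 1) * Poly_Mapping.lookup p (m + Poly_Mapping.single v 1)"
  unfolding pd_def lookup_Abs_poly_mapping[OF pd_fin] ..

lemma pd_add: "pd v (p + q) = pd v p + pd v q"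
  by (rule poly_mapping_eqI) (simp add: lookup_pd lookup_add algebra_simps)

lemma pd_zero: "pd v 0 = 0"
  by (rule poly_mapping_eqI) (simp add: lookup_pd)

lemma pd_single: "pd v (Poly_Mapping.single m a) = Poly_Mapping.single (m - Poly_Mapping.single v 1) (of_nat (Poly_Mapping.lookup m v) * a)"
proof (rule poly_mapping_eqI)
  fix n
  show "Poly_Mapping.lookup (pd v (Poly_Mapping.single m a)) n =
        Poly_Mapping.lookup (Poly_Mapping.single (m - Poly_Mapping.single v 1) (of_nat (Poly_Mapping.lookup m v) * a)) n"
  proof (cases "m = n + Poly_Mapping.single v 1")
    case True
    then have "m - Poly_Mapping.single v 1 = n"
      by (metis add_diff_cancel_right')
    then show ?thesis using True by (simp add: lookup_pd lookup_single lookup_add)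
  next
    case False
    have "Poly_Mapping.lookup m v = 0" if "m - Poly_Mapping.single v 1 = n"
    proof (rule ccontr)
      assume "Poly_Mapping.lookup m v \<noteq> 0"
      then have "m = n + Poly_Mapping.single v 1" using that
        by (intro poly_mapping_eqI) (auto simp: lookup_add minus_poly_mapping.rep_eq lookup_single when_def)
      with False show False by simp
    qed
    then show ?thesis using False by (auto simp: lookup_pd lookup_single when_def)
  qed
qed

lemma update_eq_add: "a \<notin> Poly_Mapping.keys f \<Longrightarrow> Poly_Mapping.update a b f = f + Poly_Mapping.single a b"
  by (rule poly_mapping_eqI) (auto simp: lookup_update lookup_add lookup_single in_keys_iff when_def)

lemma poly_induct:
  assumes "P 0" "\<And>f a b. P f \<Longrightarrow> P (f + Poly_Mapping.single a b)"
  shows "P f"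
  by (induction f rule: update_induct) (auto simp: update_eq_add assms)

lemma pm_sub_lem:
  fixes m n :: "nat \<Rightarrow>\<^sub>0 nat"
  assumes "Poly_Mapping.lookup m v \<noteq> 0"
  shows "n + (m - Poly_Mapping.single v 1) = m + n - Poly_Mapping.single v 1"
        "(m - Poly_Mapping.single v 1) + n = m + n - Poly_Mapping.single v 1"
        "n + (m - Poly_Mapping.single v 1) = n + m - Poly_Mapping.single v 1"
        "(m - Poly_Mapping.single v 1) + n = n + m - Poly_Mapping.single v 1"
  using assms by (auto intro!: poly_mapping_eqI simp: lookup_add minus_poly_mapping.rep_eq lookup_single when_def)

lemma pd_mono_mono:
  "pd v (Poly_Mapping.single m a * Poly_Mapping.single n b)
   = pd v (Poly_Mapping.single m a) * Poly_Mapping.single n b + Poly_Mapping.single m a * pd v (Poly_Mapping.single n b)"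
proof (cases "Poly_Mapping.lookup m v = 0"; cases "Poly_Mapping.lookup n v = 0")
  assume "Poly_Mapping.lookup m v = 0" "Poly_Mapping.lookup n v = 0"
  then show ?thesis by (simp add: mult_single pd_single lookup_add)
next
  assume a: "Poly_Mapping.lookup m v = 0" "Poly_Mapping.lookup n v \<noteq> 0"
  then show ?thesis by (simp add: mult_single pd_single lookup_add pm_sub_lem[OF a(2), simplified] add.commute mult.commute mult.left_commute mult.assoc)
next
  assume a: "Poly_Mapping.lookup m v \<noteq> 0" "Poly_Mapping.lookup n v = 0"
  then show ?thesis by (simp add: mult_single pd_single lookup_add pm_sub_lem[OF a(1), simplified] algebra_simps)
next
  assume a: "Poly_Mapping.lookup m v \<noteq> 0" "Poly_Mapping.lookup n v \<noteq> 0"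
  then show ?thesis by (simp add: mult_single pd_single lookup_add pm_sub_lem[OF a(1), simplified] pm_sub_lem[OF a(2), simplified]
      single_add[symmetric] algebra_simps)
qed

lemma pd_mult: "pd v (p * q) = pd v p * q + p * pd v q"
proof (induction p rule: poly_induct)
  case 1 then show ?case by (simp add: pd_zero)
next
  case (2 f a b)
  have "pd v (Poly_Mapping.single a b * q) = pd v (Poly_Mapping.single a b) * q + Poly_Mapping.single a b * pd v q"
  proof (induction q rule: poly_induct)
    case 1 then show ?case by (simp add: pd_zero)
  next
    case (2 g c d)
    then show ?case by (simp add: distrib_left distrib_right pd_add pd_mono_mono algebra_simps)
  qed
  then show ?case using 2 by (simp add: distrib_left distrib_right pd_add algebra_simps)
qed

lemma pd_cst: "pd v (cst c) = 0"
  unfolding cst_def by (simp add: pd_single)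

lemma pd_one: "pd v 1 = 0"
  using pd_cst[of v 1] by (simp add: cst_1)

lemma pd_X: "pd v (X k) = (if k = v then 1 else 0)"
  unfolding X_def by (simp add: pd_single lookup_single when_def)

lemma pd_uminus: "pd v (- p) = - pd v p"
proof -
  have "pd v p + pd v (-p) = 0" using pd_add[of v p "-p"] by (simp add: pd_zero)
  then show ?thesis by (metis add.commute eq_neg_iff_add_eq_0)
qed

lemma pd_diff: "pd v (p - q) = pd v p - pd v q"
  using pd_add[of v p "-q"] by (simp add: pd_uminus)

lemma pd_cst_mult: "pd v (cst c * p) = cst c * pd v p"
  by (simp add: pd_mult pd_cst)


definition D0 :: "'k::field pl" where "D0 = X 0 - X 2"
definition D1 :: "'k::field pl" where "D1 = X 1 - X 3"

definition L1 :: "'k::field mat2 \<Rightarrow> 'k pl" where "L1 A = D0 * pp A 0 + D1 * pp A 1 - (gg A - hh A)"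
definition L2 :: "'k::field mat2 \<Rightarrow> 'k pl" where "L2 A = D0 * qq A 2 + D1 * qq A 3 - (gg A - hh A)"
definition L3 :: "'k::field mat2 \<Rightarrow> nat \<Rightarrow> 'k pl" where "L3 A j = D0 * al A 0 j + D1 * al A 1 j - (pd (j - 2) (gg A) - qq A j)"
definition L4 :: "'k::field mat2 \<Rightarrow> nat \<Rightarrow> 'k pl" where "L4 A i = al A i 2 * D0 + al A i 3 * D1 - (pd i (gg A) - pp A i)"
definition L5 :: "'k::field mat2 \<Rightarrow> nat \<Rightarrow> 'k pl" where "L5 A j = D0 * de A 0 j + D1 * de A 1 j - (pd j (hh A) - qq A j)"
definition L6 :: "'k::field mat2 \<Rightarrow> nat \<Rightarrow> 'k pl" where "L6 A i = de A i 2 * D0 + de A i 3 * D1 - (pd (i + 2) (hh A) - pp A i)"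

definition finv :: "'k::field mat2 \<Rightarrow> bool" where
  "finv A \<longleftrightarrow> L1 A = 0 \<and> L2 A = 0 \<and> (\<forall>j\<in>{2,3}. L3 A j = 0) \<and> (\<forall>i\<in>{0,1}. L4 A i = 0) \<and>
     (\<forall>j\<in>{2,3}. L5 A j = 0) \<and> (\<forall>i\<in>{0,1}. L6 A i = 0) \<and>
     Poly_Mapping.keys (gg A) \<subseteq> {m. \<forall>v. v \<noteq> 0 \<and> v \<noteq> 1 \<longrightarrow> Poly_Mapping.lookup m v = 0} \<and>
     Poly_Mapping.keys (hh A) \<subseteq> {m. \<forall>v. v \<noteq> 2 \<and> v \<noteq> 3 \<longrightarrow> Poly_Mapping.lookup m v = 0}"

lemma data_add:
  assumes "goodM A" "goodM B"
  shows "gg (madd A B) = gg A + gg B" "hh (madd A B) = hh A + hh B"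
    "pp (madd A B) i = pp A i + pp B i" "qq (madd A B) j = qq A j + qq B j"
    "al (madd A B) i j = al A i j + al B i j" "de (madd A B) i j = de A i j + de B i j"
  using assms by (simp_all add: gg_def hh_def pp_def qq_def al_def de_def madd_def cp_add goodM_def)

lemma data_scale:
  assumes "goodM A"
  shows "gg (mscale c A) = cst c * gg A" "hh (mscale c A) = cst c * hh A"
    "pp (mscale c A) i = cst c * pp A i" "qq (mscale c A) j = cst c * qq A j"
    "al (mscale c A) i j = cst c * al A i j" "de (mscale c A) i j = cst c * de A i j"
  using assms by (simp_all add: gg_def hh_def pp_def qq_def al_def de_def mscale_def cp_scale goodM_def)

lemma data_one:
  "gg mone = 1" "hh mone = 1" "pp mone i = 0" "qq mone j = 0" "al mone i j = 0" "de mone i j = 0"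
  by (simp_all add: gg_def hh_def pp_def qq_def al_def de_def mone_def cp_one cp_zero)

lemma data_C1:
  "gg C1 = X 0" "hh C1 = X 2" "pp C1 i = (if i = 0 then 1 else 0)" "qq C1 j = (if j = 2 then 1 else 0)"
  "al C1 i j = 0" "de C1 i j = 0"
  by (simp_all add: gg_def hh_def pp_def qq_def al_def de_def C1_def genmat_def cp_xvar cp_yvar)

lemma data_C2:
  "gg C2 = X 1" "hh C2 = X 3" "pp C2 i = (if i = 1 then 1 else 0)" "qq C2 j = (if j = 3 then 1 else 0)"
  "al C2 i j = 0" "de C2 i j = 0"
  by (simp_all add: gg_def hh_def pp_def qq_def al_def de_def C2_def genmat_def cp_xvar cp_yvar)

lemma keys_X: "Poly_Mapping.keys (X i :: 'k::field pl) = {Poly_Mapping.single i 1}"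
  by (simp add: X_def)

lemma keys_cst_mult: "Poly_Mapping.keys (cst c * p) \<subseteq> Poly_Mapping.keys p"
proof
  fix m assume "m \<in> Poly_Mapping.keys (cst c * p)"
  then show "m \<in> Poly_Mapping.keys p" by (auto simp: in_keys_iff lookup_cst_mult)
qed

lemma keys_mult_sub:
  assumes "Poly_Mapping.keys p \<subseteq> {m. \<forall>v. P v \<longrightarrow> Poly_Mapping.lookup m v = 0}"
      "Poly_Mapping.keys q \<subseteq> {m. \<forall>v. P v \<longrightarrow> Poly_Mapping.lookup m v = 0}"
  shows "Poly_Mapping.keys (p * q) \<subseteq> {m. \<forall>v. P v \<longrightarrow> Poly_Mapping.lookup m (v::nat) = (0::nat)}"
proof
  fix x assume "x \<in> Poly_Mapping.keys (p * q)"
  then obtain u w where "x = u + w" "u \<in> Poly_Mapping.keys p" "w \<in> Poly_Mapping.keys q"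
    using keys_mult[of p q] by blast
  then show "x \<in> {m. \<forall>v. P v \<longrightarrow> Poly_Mapping.lookup m v = 0}"
    using assms by (auto simp: lookup_add)
qed

lemma keys_add_sub:
  assumes "Poly_Mapping.keys p \<subseteq> K" "Poly_Mapping.keys q \<subseteq> K"
  shows "Poly_Mapping.keys (p + q) \<subseteq> K"
  using keys_add[of p q] assms by auto

lemmas Ldefs = L1_def L2_def L3_def L4_def L5_def L6_def

lemma finv_one: "finv mone"
  by (simp add: finv_def Ldefs data_one pd_one)

lemma finv_C1: "finv C1"
  by (auto simp: finv_def Ldefs data_C1 pd_X D0_def keys_X lookup_single)

lemma finv_C2: "finv C2"
  by (auto simp: finv_def Ldefs data_C2 pd_X D1_def D0_def keys_X lookup_single)

lemma finv_add: "goodM A \<Longrightarrow> goodM B \<Longrightarrow> finv A \<Longrightarrow> finv B \<Longrightarrow> finv (madd A B)"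
proof -
  assume g: "goodM A" "goodM B" and f: "finv A" "finv B"
  have "L1 (madd A B) = L1 A + L1 B" "L2 (madd A B) = L2 A + L2 B"
    "L3 (madd A B) j = L3 A j + L3 B j" "L4 (madd A B) i = L4 A i + L4 B i"
    "L5 (madd A B) j = L5 A j + L5 B j" "L6 (madd A B) i = L6 A i + L6 B i" for i j
    by (simp_all add: Ldefs data_add[OF g] pd_add algebra_simps)
  moreover have "Poly_Mapping.keys (gg A + gg B) \<subseteq> {m. \<forall>v. v \<noteq> 0 \<and> v \<noteq> 1 \<longrightarrow> Poly_Mapping.lookup m v = 0}"
    by (rule keys_add_sub) (use f in \<open>simp_all add: finv_def\<close>)
  moreover have "Poly_Mapping.keys (hh A + hh B) \<subseteq> {m. \<forall>v. v \<noteq> 2 \<and> v \<noteq> 3 \<longrightarrow> Poly_Mapping.lookup m v = 0}"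
    by (rule keys_add_sub) (use f in \<open>simp_all add: finv_def\<close>)
  ultimately show ?thesis using f unfolding finv_def data_add[OF g] by auto
qed

lemma finv_scale: "goodM A \<Longrightarrow> finv A \<Longrightarrow> finv (mscale c A)"
proof -
  assume g: "goodM A" and f: "finv A"
  have "L1 (mscale c A) = cst c * L1 A" "L2 (mscale c A) = cst c * L2 A"
    "L3 (mscale c A) j = cst c * L3 A j" "L4 (mscale c A) i = cst c * L4 A i"
    "L5 (mscale c A) j = cst c * L5 A j" "L6 (mscale c A) i = cst c * L6 A i" for i j
    by (simp_all add: Ldefs data_scale[OF g] pd_cst_mult algebra_simps)
  moreover have "Poly_Mapping.keys (cst c * gg A) \<subseteq> {m. \<forall>v. v \<noteq> 0 \<and> v \<noteq> 1 \<longrightarrow> Poly_Mapping.lookup m v = 0}"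
    using keys_cst_mult f by (fastforce simp: finv_def)
  moreover have "Poly_Mapping.keys (cst c * hh A) \<subseteq> {m. \<forall>v. v \<noteq> 2 \<and> v \<noteq> 3 \<longrightarrow> Poly_Mapping.lookup m v = 0}"
    using keys_cst_mult f by (fastforce simp: finv_def)
  ultimately show ?thesis using f unfolding finv_def data_scale[OF g] by auto
qed

lemma finv_mul: "shapeM A \<Longrightarrow> shapeM B \<Longrightarrow> finv A \<Longrightarrow> finv B \<Longrightarrow> finv (mmul A B)"
proof -
  assume s: "shapeM A" "shapeM B" and f: "finv A" "finv B"
  note m = gg_mul[OF s] hh_mul[OF s] pp_mul[OF s] qq_mul[OF s] al_mul[OF s] de_mul[OF s]
  have "L1 (mmul A B) = gg A * L1 B + L1 A * hh B" "L2 (mmul A B) = hh A * L2 B + L2 A * gg B"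
    by (simp_all add: Ldefs m algebra_simps)
  moreover have "j \<in> {2,3} \<Longrightarrow> L3 (mmul A B) j = gg A * L3 B j + L3 A j * gg B + L1 A * qq B j" for j
    by (simp add: Ldefs m pd_mult algebra_simps)
  moreover have "i \<in> {0,1} \<Longrightarrow> L4 (mmul A B) i = gg A * L4 B i + L4 A i * gg B + pp A i * L2 B" for i
    by (simp add: Ldefs m pd_mult algebra_simps)
  moreover have "j \<in> {2,3} \<Longrightarrow> L5 (mmul A B) j = hh A * L5 B j + L5 A j * hh B - qq A j * L1 B" for j
    by (simp add: Ldefs m pd_mult algebra_simps)
  moreover have "i \<in> {0,1} \<Longrightarrow> L6 (mmul A B) i = hh A * L6 B i + L6 A i * hh B - pp B i * L2 A" for i
    by (simp add: Ldefs m pd_mult algebra_simps)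
  moreover have "Poly_Mapping.keys (gg A * gg B) \<subseteq> {m. \<forall>v. v \<noteq> 0 \<and> v \<noteq> 1 \<longrightarrow> Poly_Mapping.lookup m v = 0}"
    by (rule keys_mult_sub) (use f in \<open>simp_all add: finv_def\<close>)
  moreover have "Poly_Mapping.keys (hh A * hh B) \<subseteq> {m. \<forall>v. v \<noteq> 2 \<and> v \<noteq> 3 \<longrightarrow> Poly_Mapping.lookup m v = 0}"
    by (rule keys_mult_sub) (use f in \<open>simp_all add: finv_def\<close>)
  ultimately show ?thesis using f unfolding finv_def m by auto
qed

lemma Falg_finv: "A \<in> Falg \<Longrightarrow> finv A"
proof (induction rule: Falg.induct)
  case one then show ?case by (rule finv_one)
next
  case gen1 then show ?case by (rule finv_C1)
next
  case gen2 then show ?case by (rule finv_C2)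
next
  case (add A B) then show ?case by (simp add: finv_add Falg_good)
next
  case (scale A c) then show ?case by (simp add: finv_scale Falg_good)
next
  case (mul A B) then show ?case by (simp add: finv_mul Falg_shape)
qed


lemma Qlem:
  fixes D0 D1 a02 a03 a12 a13 p0 p1 q2 q3 :: "'a::idom"
  assumes "D0 * a02 + D1 * a12 = 0" "D0 * a03 + D1 * a13 = 0"
    "a02 * D0 + a03 * D1 = 0" "a12 * D0 + a13 * D1 = 0"
  shows "D0^2 * (- a02 * p1 * q3 + a03 * p1 * q2 + a12 * p0 * q3 - a13 * p0 * q2)
       = - a13 * (D0 * p0 + D1 * p1) * (D0 * q2 + D1 * q3)"
  using assms by algebra

lemma sum_Pow_insert:
  assumes "finite A" "a \<notin> A"
  shows "(\<Sum>S\<in>Pow (insert a A). f S) = (\<Sum>S\<in>Pow A. f S) + (\<Sum>S\<in>Pow A. f (insert a S))"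
proof -
  have "Pow (insert a A) = Pow A \<union> insert a ` Pow A" by (rule Pow_insert)
  moreover have "Pow A \<inter> insert a ` Pow A = {}" using assms by auto
  moreover have "inj_on (insert a) (Pow A)"
  proof (rule inj_onI)
    fix X Y assume "X \<in> Pow A" "Y \<in> Pow A" "insert a X = insert a Y"
    then show "X = Y" using assms by (metis Diff_insert_absorb PowD subsetD)
  qed
  ultimately show ?thesis using assms by (simp add: sum.union_disjoint sum.reindex)
qed

lemma sum_Pow_empty: "(\<Sum>S\<in>Pow {}. f S) = f {}" by simp

lemma sign_insL: "a \<notin> S \<Longrightarrow> S \<noteq> {} \<Longrightarrow> finite S \<Longrightarrow> sc_sign (insert a S) T = sc_sign {a} T * sc_sign S T"
  by (rule sign_insertL)
lemma sign_insR: "b \<notin> T \<Longrightarrow> T \<noteq> {} \<Longrightarrow> finite S \<Longrightarrow> sc_sign S (insert b T) = sc_sign S {b} * sc_sign S T"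
  by (rule sign_insertR)
lemmas sgn2 = sign_single sign_insL sign_insR sign_empty1 sign_empty2

lemma cpC1: "cp (C1 R1 R1) S = (if S = {} then X 0 else 0)" "cp (C1 R2 R2) S = (if S = {} then X 2 else 0)"
  "cp (C1 R1 R2) S = (if S = {0} then 1 else 0)" "cp (C1 R2 R1) S = (if S = {2} then 1 else 0)"
  by (simp_all add: C1_def genmat_def cp_xvar cp_yvar)
lemma cpC2: "cp (C2 R1 R1) S = (if S = {} then X 1 else 0)" "cp (C2 R2 R2) S = (if S = {} then X 3 else 0)"
  "cp (C2 R1 R2) S = (if S = {1} then 1 else 0)" "cp (C2 R2 R1) S = (if S = {3} then 1 else 0)"
  by (simp_all add: C2_def genmat_def cp_xvar cp_yvar)

lemma single_neq: "a \<noteq> b \<Longrightarrow> Poly_Mapping.single a (1::nat) \<noteq> Poly_Mapping.single b 1"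
proof
  assume "a \<noteq> b" "Poly_Mapping.single a (1::nat) = Poly_Mapping.single b 1"
  then have "Poly_Mapping.lookup (Poly_Mapping.single a (1::nat)) a = Poly_Mapping.lookup (Poly_Mapping.single b 1) a" by simp
  with \<open>a \<noteq> b\<close> show False by (simp add: lookup_single when_def)
qed

lemma D0_nz: "(D0 :: 'k::field pl) \<noteq> 0"
proof
  assume "(D0 :: 'k pl) = 0"
  then have "Poly_Mapping.lookup (D0 :: 'k pl) (Poly_Mapping.single 0 1) = 0" by simp
  then show False using single_neq[of "2::nat" 0] by (simp add: D0_def X_def lookup_minus lookup_single when_def)
qed

lemma D1_nz: "(D1 :: 'k::field pl) \<noteq> 0"
proof
  assume "(D1 :: 'k pl) = 0"
  then have "Poly_Mapping.lookup (D1 :: 'k pl) (Poly_Mapping.single 1 1) = 0" by simp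
  then show False using single_neq[of "3::nat" 1] by (simp add: D1_def X_def lookup_minus lookup_single when_def)
qed


lemma C1_Falg: "C1 \<in> Falg" by (rule Falg.gen1)
lemma C2_Falg: "C2 \<in> Falg" by (rule Falg.gen2)

lemma centre_comm: "Z \<in> centreF \<Longrightarrow> A \<in> Falg \<Longrightarrow> mmul Z A = mmul A Z"
  by (simp add: centreF_def)

lemma centre_Falg: "Z \<in> centreF \<Longrightarrow> Z \<in> Falg"
  by (simp add: centreF_def)

lemma keys_zero_cst:
  assumes "Poly_Mapping.keys p \<subseteq> {0}"
  shows "p = cst (Poly_Mapping.lookup p 0)"
proof (rule poly_mapping_eqI)
  fix m show "Poly_Mapping.lookup p m = Poly_Mapping.lookup (cst (Poly_Mapping.lookup p 0)) m"
    using assms by (cases "m = 0") (auto simp: cst_def lookup_single when_def in_keys_iff)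
qed

lemma centre_data:
  fixes Z :: "'k::field mat2"
  assumes "Z \<in> centreF"
  shows "gg Z = hh Z" "pp Z 0 = 0" "pp Z 1 = 0" "qq Z 2 = 0" "qq Z 3 = 0"
    "gg Z = cst (Poly_Mapping.lookup (gg Z) 0)"
proof -
  have ZF: "Z \<in> Falg" using assms by (rule centre_Falg)
  have sZ: "shapeM Z" using ZF by (rule Falg_shape)
  have c1: "mmul Z C1 = mmul C1 Z" using assms C1_Falg by (rule centre_comm)
  have c2: "mmul Z C2 = mmul C2 Z" using assms C2_Falg by (rule centre_comm)
  have p1: "pp (mmul Z C1) i = pp (mmul C1 Z) i" "pp (mmul Z C2) i = pp (mmul C2 Z) i"
    "qq (mmul Z C1) j = qq (mmul C1 Z) j" "qq (mmul Z C2) j = qq (mmul C2 Z) j" for i j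
    using c1 c2 by simp_all
  note m1 = pp_mul[OF sZ shapeM_C1] pp_mul[OF shapeM_C1 sZ] pp_mul[OF sZ shapeM_C2] pp_mul[OF shapeM_C2 sZ]
  note m2 = qq_mul[OF sZ shapeM_C1] qq_mul[OF shapeM_C1 sZ] qq_mul[OF sZ shapeM_C2] qq_mul[OF shapeM_C2 sZ]
  have "pp Z 1 * X 2 = X 0 * pp Z 1" using p1(1)[of 1] by (simp add: m1 data_C1)
  then have "D0 * pp Z 1 = 0" unfolding D0_def by (simp only: left_diff_distrib mult.commute[of "X _" "pp Z 1"]) simp
  then show pz1: "pp Z 1 = 0" by (metis D0_nz mult_eq_0_iff)
  have "pp Z 0 * X 3 = X 1 * pp Z 0" using p1(2)[of 0] by (simp add: m1 data_C2)
  then have "D1 * pp Z 0 = 0" unfolding D1_def by (simp only: left_diff_distrib mult.commute[of "X _" "pp Z 0"]) simp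
  then show pz0: "pp Z 0 = 0" by (metis D1_nz mult_eq_0_iff)
  have "qq Z 3 * X 0 = X 2 * qq Z 3" using p1(3)[of 3] by (simp add: m2 data_C1)
  then have "D0 * qq Z 3 = 0" unfolding D0_def by (simp only: left_diff_distrib mult.commute[of "X _" "qq Z 3"]) simp
  then show "qq Z 3 = 0" by (metis D0_nz mult_eq_0_iff)
  have "qq Z 2 * X 1 = X 3 * qq Z 2" using p1(4)[of 2] by (simp add: m2 data_C2)
  then have "D1 * qq Z 2 = 0" unfolding D1_def by (simp only: left_diff_distrib mult.commute[of "X _" "qq Z 2"]) simp
  then show "qq Z 2 = 0" by (metis D1_nz mult_eq_0_iff)
  show gh: "gg Z = hh Z" using p1(2)[of 1] pz1 by (simp add: m1 data_C2)
  have f: "finv Z" using ZF by (rule Falg_finv)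
  have "Poly_Mapping.keys (gg Z) \<subseteq> {0}"
  proof
    fix m assume m: "m \<in> Poly_Mapping.keys (gg Z)"
    then have "\<forall>v. v \<noteq> 0 \<and> v \<noteq> 1 \<longrightarrow> Poly_Mapping.lookup m v = 0"
      "\<forall>v. v \<noteq> 2 \<and> v \<noteq> 3 \<longrightarrow> Poly_Mapping.lookup m v = 0"
      using f gh unfolding finv_def by auto
    then have "Poly_Mapping.lookup m v = 0" for v by (cases "v = 0 \<or> v = 1") auto
    then show "m \<in> {0}" by (simp add: poly_mapping_eqI)
  qed
  then show "gg Z = cst (Poly_Mapping.lookup (gg Z) 0)" by (rule keys_zero_cst)
qed


lemma sub4_cases:
  assumes "S \<subseteq> {0,1,2,3::nat}"
  shows "S = {} \<or> S = {0} \<or> S = {1} \<or> S = {2} \<or> S = {3} \<or> S = {0,1} \<or> S = {0,2} \<or> S = {0,3} \<or>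
         S = {1,2} \<or> S = {1,3} \<or> S = {2,3} \<or> S = {0,1,2} \<or> S = {0,1,3} \<or> S = {0,2,3} \<or>
         S = {1,2,3} \<or> S = {0,1,2,3}"
proof -
  have "S = (if 0 \<in> S then {0} else {}) \<union> (if 1 \<in> S then {1} else {}) \<union>
            (if 2 \<in> S then {2} else {}) \<union> (if 3 \<in> S then {3} else {})"
    using assms by auto
  then show ?thesis
    by (cases "0 \<in> S"; cases "1 \<in> S"; cases "2 \<in> S"; cases "3 \<in> S") (simp_all add: insert_commute)
qed

lemma wt_vals: "wt {} = 0" "wt {0} = 1" "wt {1} = 1" "wt {2} = -1" "wt {3} = -1"
  "wt {0,1} = 2" "wt {0,2} = 0" "wt {0,3} = 0" "wt {1,2} = 0" "wt {1,3} = 0" "wt {2,3} = -2"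
  "wt {0,1,2} = 1" "wt {0,1,3} = 1" "wt {0,2,3} = -1" "wt {1,2,3} = -1" "wt {0,1,2,3} = 0"
  by (simp_all add: wt_def)

lemma entry11:
  fixes M :: "'k::field mat2"
  assumes M: "shapeM M" and S: "finite S"
    and h: "cp (M R1 R1) {} = 0" "cp (M R1 R1) {0,2} = 0" "cp (M R1 R1) {0,3} = 0" "cp (M R1 R1) {1,2} = 0"
    "cp (M R1 R1) {1,3} = 0" "cp (M R1 R1) {0,1,2,3} = 0"
  shows "cp (M R1 R1) S = 0"
proof (cases "S \<subseteq> {0,1,2,3} \<and> wt S = ew R1 R1")
  case False then show ?thesis using shape_zero[OF M S] by simp
next
  case True
  then have S4: "S \<subseteq> {0,1,2,3}" and W: "wt S = 0" by auto
  from sub4_cases[OF S4] W show ?thesis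
    by (elim disjE; simp only: wt_vals h; simp)
qed

lemma entry22:
  fixes M :: "'k::field mat2"
  assumes M: "shapeM M" and S: "finite S"
    and h: "cp (M R2 R2) {} = 0" "cp (M R2 R2) {0,2} = 0" "cp (M R2 R2) {0,3} = 0" "cp (M R2 R2) {1,2} = 0" "cp (M R2 R2) {1,3} = 0" "cp (M R2 R2) {0,1,2,3} = 0"
  shows "cp (M R2 R2) S = 0"
proof (cases "S \<subseteq> {0,1,2,3} \<and> wt S = ew R2 R2")
  case False then show ?thesis using shape_zero[OF M S] by simp
next
  case True
  then have S4: "S \<subseteq> {0,1,2,3}" and W: "wt S = 0" by auto
  from sub4_cases[OF S4] W show ?thesis
    by (elim disjE; simp only: wt_vals h; simp)
qed

lemma entry12:
  fixes M :: "'k::field mat2"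
  assumes M: "shapeM M" and S: "finite S"
    and h: "cp (M R1 R2) {0} = 0" "cp (M R1 R2) {1} = 0" "cp (M R1 R2) {0,1,2} = 0" "cp (M R1 R2) {0,1,3} = 0"
  shows "cp (M R1 R2) S = 0"
proof (cases "S \<subseteq> {0,1,2,3} \<and> wt S = ew R1 R2")
  case False then show ?thesis using shape_zero[OF M S] by simp
next
  case True
  then have S4: "S \<subseteq> {0,1,2,3}" and W: "wt S = 1" by auto
  from sub4_cases[OF S4] W show ?thesis
    by (elim disjE; simp only: wt_vals h; simp)
qed

lemma entry21:
  fixes M :: "'k::field mat2"
  assumes M: "shapeM M" and S: "finite S"
    and h: "cp (M R2 R1) {2} = 0" "cp (M R2 R1) {3} = 0" "cp (M R2 R1) {0,2,3} = 0" "cp (M R2 R1) {1,2,3} = 0"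
  shows "cp (M R2 R1) S = 0"
proof (cases "S \<subseteq> {0,1,2,3} \<and> wt S = ew R2 R1")
  case False then show ?thesis using shape_zero[OF M S] by simp
next
  case True
  then have S4: "S \<subseteq> {0,1,2,3}" and W: "wt S = -1" by auto
  from sub4_cases[OF S4] W show ?thesis
    by (elim disjE; simp only: wt_vals h; simp)
qed

lemma zero_matrix:
  fixes M :: "'k::field mat2"
  assumes M: "shapeM M"
    and "gg M = 0" "hh M = 0" "pp M 0 = 0" "pp M 1 = 0" "qq M 2 = 0" "qq M 3 = 0"
    "al M 0 2 = 0" "al M 0 3 = 0" "al M 1 2 = 0" "al M 1 3 = 0"
    "de M 0 2 = 0" "de M 0 3 = 0" "de M 1 2 = 0" "de M 1 3 = 0"
    "cp (M R1 R2) {0,1,2} = 0" "cp (M R1 R2) {0,1,3} = 0"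
    "cp (M R2 R1) {0,2,3} = 0" "cp (M R2 R1) {1,2,3} = 0"
    "cp (M R1 R1) {0,1,2,3} = 0" "cp (M R2 R2) {0,1,2,3} = 0"
  shows "M = mzero"
proof (rule ext, rule ext)
  fix i j
  note h = assms(2-)[unfolded gg_def hh_def pp_def qq_def al_def de_def]
  have gM: "good (M i j)" using M by (simp add: shapeM_def goodM_def)
  show "M i j = mzero i j" unfolding mzero_def
  proof (rule good_ext[OF gM good_zero])
    fix S :: "nat set" assume S: "finite S"
    show "cp (M i j) S = cp sc_zero S"
      using entry11[OF M S] entry12[OF M S] entry21[OF M S] entry22[OF M S] h
      by (cases i; cases j; simp add: cp_zero)
  qed
qed


lemma E11_core:
  fixes D0 D1 a02 a03 a12 a13 d12 d13 b2 b3 pA0 pA1 pB0 pB1 qA2 qA3 qB2 qB3 G1 G2 :: "'a::idom"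
  assumes "D0*a02 + D1*a12 = 0" "D0*a03 + D1*a13 = 0" "a02*D0 + a03*D1 = 0" "a12*D0 + a13*D1 = 0"
    "d12*D0 + d13*D1 = 0" "a12 - d12 = D0*b2" "a13 - d13 = D0*b3"
    "D0*pA0 + D1*pA1 = G1" "D0*qA2 + D1*qA3 = G1" "D0*pB0 + D1*pB1 = G2" "D0*qB2 + D1*qB3 = G2"
  shows "D0^3 * (-a02*(pA1*qB3 - pB1*qA3) + a03*(pA1*qB2 - pB1*qA2) + a12*(pA0*qB3 - pB0*qA3)
          - a13*(pA0*qB2 - pB0*qA2) + b2*(qA3*G2 - qB3*G1) - b3*(qA2*G2 - qB2*G1)) = 0"
  using assms by algebra


lemma E22_core:
  fixes D0 D1 a03 a13 d02 d03 d12 d13 c0 c1 pA0 pA1 pB0 pB1 qA2 qA3 qB2 qB3 G1 G2 :: "'a::idom"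
  assumes "D0*d02 + D1*d12 = 0" "D0*d03 + D1*d13 = 0" "d02*D0 + d03*D1 = 0" "d12*D0 + d13*D1 = 0"
    "D0*a03 + D1*a13 = 0" "D0*c0 = d03 - a03" "D0*c1 = d13 - a13"
    "D0*pA0 + D1*pA1 = G1" "D0*qA2 + D1*qA3 = G1" "D0*pB0 + D1*pB1 = G2" "D0*qB2 + D1*qB3 = G2"
  shows "D0^3 * (d12*(pA0*qB3 - pB0*qA3) - d13*(pA0*qB2 - pB0*qA2) + d03*(pA1*qB2 - pB1*qA2)
     - d02*(pA1*qB3 - pB1*qA3) - c1*(pB0*G1 - pA0*G2) + c0*(pB1*G1 - pA1*G2)) = 0"
  using assms by algebra

lemma E12_core:
  fixes D0 D1 a0 a1 pA0 pA1 pB0 pB1 G1 G2 :: "'a::idom"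
  assumes "D0*a0 + D1*a1 = 0" "D0*pA0 + D1*pA1 = G1" "D0*pB0 + D1*pB1 = G2"
  shows "D0 * (a1*(pB0*G1 - pA0*G2) - a0*(pB1*G1 - pA1*G2)) = 0"
  using assms by algebra

lemma E21_core:
  fixes D0 D1 d2 d3 qA2 qA3 qB2 qB3 G1 G2 :: "'a::idom"
  assumes "d2*D0 + d3*D1 = 0" "D0*qA2 + D1*qA3 = G1" "D0*qB2 + D1*qB3 = G2"
  shows "D1 * (d2*(qA3*G2 - qB3*G1) - d3*(qA2*G2 - qB2*G1)) = 0"
  using assms by algebra

context
  fixes Z T :: "'k::field mat2"
  assumes Z: "shapeM Z" and T: "shapeM T"
    and z1: "cp (Z R1 R1) {} = 0" and z2: "cp (Z R2 R2) {} = 0"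
    and z3: "cp (Z R1 R2) {0} = 0" and z4: "cp (Z R1 R2) {1} = 0"
    and z5: "cp (Z R2 R1) {2} = 0" and z6: "cp (Z R2 R1) {3} = 0"
    and t1: "cp (T R1 R1) {} = 0" and t2: "cp (T R2 R2) {} = 0"
begin
lemma gZ: "goodM Z" and gT: "goodM T" using Z T by (auto simp: shapeM_def)
lemmas zZ = shape_zero[OF Z] and zT = shape_zero[OF T]
lemmas zs = z1 z2 z3 z4 z5 z6 t1 t2

lemma X12: "j \<in> {2,3} \<Longrightarrow> cp (mmul Z T R1 R2) {0,1,j} =
   cp (Z R1 R1) {1,j} * cp (T R1 R2) {0} - cp (Z R1 R1) {0,j} * cp (T R1 R2) {1}"
  apply (elim insertE; simp)
   apply (simp_all add: cp_mmul[OF gZ gT] sum_Pow_insert sum_Pow_empty insert_Diff_if)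
   apply (simp_all add: zZ zT wt_def)
   apply (simp_all add: sgn2 cst_1 cst_uminus zs[simplified])
  done

lemma X21: "i \<in> {0,1} \<Longrightarrow> cp (mmul Z T R2 R1) {i,2,3} =
   cp (Z R2 R2) {i,2} * cp (T R2 R1) {3} - cp (Z R2 R2) {i,3} * cp (T R2 R1) {2}"
  apply (elim insertE; simp)
   apply (simp_all add: cp_mmul[OF gZ gT] sum_Pow_insert sum_Pow_empty insert_Diff_if)
   apply (simp_all add: zZ zT wt_def)
   apply (simp_all add: sgn2 cst_1 cst_uminus zs[simplified])
  done

lemma X11: "cp (mmul Z T R1 R1) {0,1,2,3} =
    - cp (Z R1 R1) {0,2} * cp (T R1 R1) {1,3} + cp (Z R1 R1) {0,3} * cp (T R1 R1) {1,2}
    + cp (Z R1 R1) {1,2} * cp (T R1 R1) {0,3} - cp (Z R1 R1) {1,3} * cp (T R1 R1) {0,2}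
    + cp (Z R1 R2) {0,1,2} * cp (T R2 R1) {3} - cp (Z R1 R2) {0,1,3} * cp (T R2 R1) {2}"
  apply (simp add: cp_mmul[OF gZ gT] sum_Pow_insert sum_Pow_empty insert_Diff_if)
  apply (simp add: zZ zT wt_def)
  apply (simp add: sgn2 cst_1 cst_uminus zs[simplified])
  done

lemma X22: "cp (mmul Z T R2 R2) {0,1,2,3} =
    cp (Z R2 R2) {1,2} * cp (T R2 R2) {0,3} - cp (Z R2 R2) {1,3} * cp (T R2 R2) {0,2}
    + cp (Z R2 R2) {0,3} * cp (T R2 R2) {1,2} - cp (Z R2 R2) {0,2} * cp (T R2 R2) {1,3}
    - cp (Z R2 R1) {1,2,3} * cp (T R1 R2) {0} + cp (Z R2 R1) {0,2,3} * cp (T R1 R2) {1}"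
  apply (simp add: cp_mmul[OF gZ gT] sum_Pow_insert sum_Pow_empty insert_Diff_if)
  apply (simp add: zZ zT wt_def)
  apply (simp add: sgn2 cst_1 cst_uminus zs[simplified])
  done
end


context
  fixes Z :: "'k::field mat2"
  assumes Z: "shapeM Z"
begin
lemma gZ': "goodM Z" using Z by (auto simp: shapeM_def)
lemmas zZ' = shape_zero[OF Z]

lemma comm_C1_12: "j \<in> {2,3} \<Longrightarrow> cp (mmul Z C1 R1 R2) {0,1,j} - cp (mmul C1 Z R1 R2) {0,1,j}
   = cp (Z R1 R1) {1,j} - cp (Z R2 R2) {1,j} - D0 * cp (Z R1 R2) {0,1,j}"
  apply (elim insertE; simp)
   apply (simp_all add: cp_mmul[OF gZ' goodM_C1] cp_mmul[OF goodM_C1 gZ'] sum_Pow_insert sum_Pow_empty insert_Diff_if)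
   apply (simp_all add: zZ' cpC1 wt_def)
   apply (simp_all add: sgn2 cst_1 cst_uminus D0_def algebra_simps)
  done

lemma comm_C2_12: "j \<in> {2,3} \<Longrightarrow> cp (mmul Z C2 R1 R2) {0,1,j} - cp (mmul C2 Z R1 R2) {0,1,j}
   = - cp (Z R1 R1) {0,j} + cp (Z R2 R2) {0,j} - D1 * cp (Z R1 R2) {0,1,j}"
  apply (elim insertE; simp)
   apply (simp_all add: cp_mmul[OF gZ' goodM_C2] cp_mmul[OF goodM_C2 gZ'] sum_Pow_insert sum_Pow_empty insert_Diff_if)
   apply (simp_all add: zZ' cpC2 wt_def)
   apply (simp_all add: sgn2 cst_1 cst_uminus D1_def algebra_simps)
  done

lemma comm_C1_21: "i \<in> {0,1} \<Longrightarrow> cp (mmul Z C1 R2 R1) {i,2,3} - cp (mmul C1 Z R2 R1) {i,2,3}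
   = D0 * cp (Z R2 R1) {i,2,3} - cp (Z R2 R2) {i,3} + cp (Z R1 R1) {i,3}"
  apply (elim insertE; simp)
   apply (simp_all add: cp_mmul[OF gZ' goodM_C1] cp_mmul[OF goodM_C1 gZ'] sum_Pow_insert sum_Pow_empty insert_Diff_if)
   apply (simp_all add: zZ' cpC1 wt_def)
   apply (simp_all add: sgn2 cst_1 cst_uminus D0_def algebra_simps)
  done

lemma comm_C2_21: "i \<in> {0,1} \<Longrightarrow> cp (mmul Z C2 R2 R1) {i,2,3} - cp (mmul C2 Z R2 R1) {i,2,3}
   = D1 * cp (Z R2 R1) {i,2,3} + cp (Z R2 R2) {i,2} - cp (Z R1 R1) {i,2}"
  apply (elim insertE; simp)
   apply (simp_all add: cp_mmul[OF gZ' goodM_C2] cp_mmul[OF goodM_C2 gZ'] sum_Pow_insert sum_Pow_empty insert_Diff_if)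
   apply (simp_all add: zZ' cpC2 wt_def)
   apply (simp_all add: sgn2 cst_1 cst_uminus D1_def algebra_simps)
  done
end


lemma cancel0: "D0 ^ n * x = 0 \<Longrightarrow> x = (0 :: 'k::field pl)"
  by (metis D0_nz mult_eq_0_iff power_not_zero)
lemma cancel1: "D1 ^ n * x = 0 \<Longrightarrow> x = (0 :: 'k::field pl)"
  by (metis D1_nz mult_eq_0_iff power_not_zero)

lemma key_ZT:
  fixes Z A B :: "'k::field mat2"
  assumes Zc: "Z \<in> centreF" and g0: "gg Z = 0" and AF: "A \<in> Falg" and BF: "B \<in> Falg"
  shows "mmul Z (madd (mmul A B) (mscale (-1) (mmul B A))) = mzero"
proof -
  define T where "T = madd (mmul A B) (mscale (-1) (mmul B A))"
  have ZF: "Z \<in> Falg" using Zc by (rule centre_Falg)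
  have sZ: "shapeM Z" and sA: "shapeM A" and sB: "shapeM B"
    using ZF AF BF by (simp_all add: Falg_shape)
  have sAB: "shapeM (mmul A B)" and sBA: "shapeM (mmul B A)" using sA sB by (simp_all add: shapeM_mul)
  have sT: "shapeM T" unfolding T_def using sAB sBA by (simp add: shapeM_add shapeM_scale)
  have gAB: "goodM (mmul A B)" and gBA: "goodM (mmul B A)" using sAB sBA by (simp_all add: shapeM_def)
  have gsBA: "goodM (mscale (-1) (mmul B A))" using gBA by (rule goodM_scale)
  note cd = centre_data[OF Zc]
  have h0: "hh Z = 0" using cd(1) g0 by simp
  note dT = data_add[OF gAB gsBA] data_scale[OF gBA]
  have Tg: "gg T = 0" unfolding T_def
    by (simp add: dT gg_mul[OF sA sB] gg_mul[OF sB sA] cst_uminus cst_1 algebra_simps)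
  have Th: "hh T = 0" unfolding T_def
    by (simp add: dT hh_mul[OF sA sB] hh_mul[OF sB sA] cst_uminus cst_1 algebra_simps)
  have Tp: "pp T i = pp B i * (gg A - hh A) - pp A i * (gg B - hh B)" if "i \<in> {0,1}" for i
    unfolding T_def using that
    by (simp add: dT pp_mul[OF sA sB] pp_mul[OF sB sA] cst_uminus cst_1 algebra_simps)
  have Tq: "qq T j = qq A j * (gg B - hh B) - qq B j * (gg A - hh A)" if "j \<in> {2,3}" for j
    unfolding T_def using that
    by (simp add: dT qq_mul[OF sA sB] qq_mul[OF sB sA] cst_uminus cst_1 algebra_simps)
  have Tal: "al T i j = pp A i * qq B j - pp B i * qq A j" if "i \<in> {0,1}" "j \<in> {2,3}" for i j
    unfolding T_def using that
    by (simp add: dT al_mul[OF sA sB] al_mul[OF sB sA] cst_uminus cst_1 algebra_simps)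
  have Tde: "de T i j = pp A i * qq B j - pp B i * qq A j" if "i \<in> {0,1}" "j \<in> {2,3}" for i j
    unfolding T_def using that
    by (simp add: dT de_mul[OF sA sB] de_mul[OF sB sA] cst_uminus cst_1 algebra_simps)
  have fA: "finv A" and fB: "finv B" and fZ: "finv Z" using AF BF ZF by (simp_all add: Falg_finv)
  have GA: "D0 * pp A 0 + D1 * pp A 1 = gg A - hh A" "D0 * qq A 2 + D1 * qq A 3 = gg A - hh A"
    using fA by (simp_all add: finv_def L1_def L2_def)
  have GB: "D0 * pp B 0 + D1 * pp B 1 = gg B - hh B" "D0 * qq B 2 + D1 * qq B 3 = gg B - hh B"
    using fB by (simp_all add: finv_def L1_def L2_def)
  have colA: "D0 * al Z 0 j + D1 * al Z 1 j = 0" if "j \<in> {2,3}" for j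
    using fZ that cd by (auto simp: finv_def L3_def g0 pd_zero)
  have rowA: "al Z i 2 * D0 + al Z i 3 * D1 = 0" if "i \<in> {0,1}" for i
    using fZ that cd by (auto simp: finv_def L4_def g0 pd_zero)
  have colD: "D0 * de Z 0 j + D1 * de Z 1 j = 0" if "j \<in> {2,3}" for j
    using fZ that cd by (auto simp: finv_def L5_def h0 pd_zero)
  have rowD: "de Z i 2 * D0 + de Z i 3 * D1 = 0" if "i \<in> {0,1}" for i
    using fZ that cd by (auto simp: finv_def L6_def h0 pd_zero)
  have c1: "mmul Z C1 = mmul C1 Z" and c2: "mmul Z C2 = mmul C2 Z"
    using Zc by (simp_all add: centre_comm C1_Falg C2_Falg)
  have cb1: "al Z 1 j - de Z 1 j = D0 * cp (Z R1 R2) {0,1,j}" if "j \<in> {2,3}" for j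
    using comm_C1_12[OF sZ that] c1 unfolding al_def de_def by simp
  have cg1: "D0 * cp (Z R2 R1) {i,2,3} = de Z i 3 - al Z i 3" if "i \<in> {0,1}" for i
    using comm_C1_21[OF sZ that] c1 unfolding al_def de_def by (simp add: algebra_simps)
  have z: "cp (Z R1 R1) {} = 0" "cp (Z R2 R2) {} = 0" "cp (Z R1 R2) {0} = 0" "cp (Z R1 R2) {1} = 0"
     "cp (Z R2 R1) {2} = 0" "cp (Z R2 R1) {3} = 0" "cp (T R1 R1) {} = 0" "cp (T R2 R2) {} = 0"
    using g0 h0 cd Tg Th by (simp_all add: gg_def hh_def pp_def qq_def)
  note X = X12[OF sZ sT z] X21[OF sZ sT z] X11[OF sZ sT z] X22[OF sZ sT z]
  note unf = al_def[symmetric] de_def[symmetric] pp_def[symmetric] qq_def[symmetric]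
  have sZT: "shapeM (mmul Z T)" using sZ sT by (rule shapeM_mul)
  have e12: "cp (mmul Z T R1 R2) {0,1,j} = 0" if j: "j \<in> {2,3}" for j
  proof -
    have e1: "cp (mmul Z T R1 R2) {0,1,j} = al Z 1 j * (pp B 0 * (gg A - hh A) - pp A 0 * (gg B - hh B))
        - al Z 0 j * (pp B 1 * (gg A - hh A) - pp A 1 * (gg B - hh B))"
      using X(1)[OF j] by (simp add: unf Tp)
    have e2: "D0 * (al Z 1 j * (pp B 0 * (gg A - hh A) - pp A 0 * (gg B - hh B))
        - al Z 0 j * (pp B 1 * (gg A - hh A) - pp A 1 * (gg B - hh B))) = 0"
      by (rule E12_core[OF colA[OF j] GA(1) GB(1)])
    show ?thesis using e1 e2 D0_nz by (metis mult_eq_0_iff)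
  qed
  have e21: "cp (mmul Z T R2 R1) {i,2,3} = 0" if i: "i \<in> {0,1}" for i
  proof -
    have e1: "cp (mmul Z T R2 R1) {i,2,3} = de Z i 2 * (qq A 3 * (gg B - hh B) - qq B 3 * (gg A - hh A))
        - de Z i 3 * (qq A 2 * (gg B - hh B) - qq B 2 * (gg A - hh A))"
      using X(2)[OF i] by (simp add: unf Tq)
    have e2: "D1 * (de Z i 2 * (qq A 3 * (gg B - hh B) - qq B 3 * (gg A - hh A))
        - de Z i 3 * (qq A 2 * (gg B - hh B) - qq B 2 * (gg A - hh A))) = 0"
      by (rule E21_core[OF rowD[OF i] GA(2) GB(2)])
    show ?thesis using e1 e2 D1_nz by (metis mult_eq_0_iff)
  qed
  have e11: "cp (mmul Z T R1 R1) {0,1,2,3} = 0"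
  proof -
    have e1: "cp (mmul Z T R1 R1) {0,1,2,3} =
      -al Z 0 2*(pp A 1*qq B 3 - pp B 1*qq A 3) + al Z 0 3*(pp A 1*qq B 2 - pp B 1*qq A 2)
      + al Z 1 2*(pp A 0*qq B 3 - pp B 0*qq A 3) - al Z 1 3*(pp A 0*qq B 2 - pp B 0*qq A 2)
      + cp (Z R1 R2) {0,1,2}*(qq A 3*(gg B - hh B) - qq B 3*(gg A - hh A))
      - cp (Z R1 R2) {0,1,3}*(qq A 2*(gg B - hh B) - qq B 2*(gg A - hh A))"
      using X(3) by (simp add: unf Tal Tq)
    have e2: "D0^3 * (-al Z 0 2*(pp A 1*qq B 3 - pp B 1*qq A 3) + al Z 0 3*(pp A 1*qq B 2 - pp B 1*qq A 2)
      + al Z 1 2*(pp A 0*qq B 3 - pp B 0*qq A 3) - al Z 1 3*(pp A 0*qq B 2 - pp B 0*qq A 2)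
      + cp (Z R1 R2) {0,1,2}*(qq A 3*(gg B - hh B) - qq B 3*(gg A - hh A))
      - cp (Z R1 R2) {0,1,3}*(qq A 2*(gg B - hh B) - qq B 2*(gg A - hh A))) = 0"
      by (rule E11_core[OF colA[of 2] colA[of 3] rowA[of 0] rowA[of 1] rowD[of 1] cb1[of 2] cb1[of 3]
            GA(1) GA(2) GB(1) GB(2)]) simp_all
    show ?thesis using e1 e2 cancel0 by metis
  qed
  have e22: "cp (mmul Z T R2 R2) {0,1,2,3} = 0"
  proof -
    have e1: "cp (mmul Z T R2 R2) {0,1,2,3} =
      de Z 1 2*(pp A 0*qq B 3 - pp B 0*qq A 3) - de Z 1 3*(pp A 0*qq B 2 - pp B 0*qq A 2)
      + de Z 0 3*(pp A 1*qq B 2 - pp B 1*qq A 2) - de Z 0 2*(pp A 1*qq B 3 - pp B 1*qq A 3)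
      - cp (Z R2 R1) {1,2,3}*(pp B 0*(gg A - hh A) - pp A 0*(gg B - hh B))
      + cp (Z R2 R1) {0,2,3}*(pp B 1*(gg A - hh A) - pp A 1*(gg B - hh B))"
      using X(4) by (simp add: unf Tde Tp)
    have e2: "D0^3 * (de Z 1 2*(pp A 0*qq B 3 - pp B 0*qq A 3) - de Z 1 3*(pp A 0*qq B 2 - pp B 0*qq A 2)
      + de Z 0 3*(pp A 1*qq B 2 - pp B 1*qq A 2) - de Z 0 2*(pp A 1*qq B 3 - pp B 1*qq A 3)
      - cp (Z R2 R1) {1,2,3}*(pp B 0*(gg A - hh A) - pp A 0*(gg B - hh B))
      + cp (Z R2 R1) {0,2,3}*(pp B 1*(gg A - hh A) - pp A 1*(gg B - hh B))) = 0"
      by (rule E22_core[OF colD[of 2] colD[of 3] rowD[of 0] rowD[of 1] colA[of 3] cg1[of 0] cg1[of 1]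
            GA(1) GA(2) GB(1) GB(2)]) simp_all
    show ?thesis using e1 e2 cancel0 by metis
  qed
  have "mmul Z T = mzero"
  proof (rule zero_matrix[OF sZT])
    show "gg (mmul Z T) = 0" "hh (mmul Z T) = 0"
      by (simp_all add: gg_mul[OF sZ sT] hh_mul[OF sZ sT] g0 h0)
    show "pp (mmul Z T) 0 = 0" "pp (mmul Z T) 1 = 0" "qq (mmul Z T) 2 = 0" "qq (mmul Z T) 3 = 0"
      by (simp_all add: pp_mul[OF sZ sT] qq_mul[OF sZ sT] g0 h0 Th Tg cd)
    show "al (mmul Z T) 0 2 = 0" "al (mmul Z T) 0 3 = 0" "al (mmul Z T) 1 2 = 0" "al (mmul Z T) 1 3 = 0"
      by (simp_all add: al_mul[OF sZ sT] g0 Tg cd[simplified])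
    show "de (mmul Z T) 0 2 = 0" "de (mmul Z T) 0 3 = 0" "de (mmul Z T) 1 2 = 0" "de (mmul Z T) 1 3 = 0"
      by (simp_all add: de_mul[OF sZ sT] h0 Th cd)
    show "cp (mmul Z T R1 R2) {0,1,2} = 0" "cp (mmul Z T R1 R2) {0,1,3} = 0"
      using e12[of 2] e12[of 3] by simp_all
    show "cp (mmul Z T R2 R1) {0,2,3} = 0" "cp (mmul Z T R2 R1) {1,2,3} = 0"
      using e21[of 0] e21[of 1] by simp_all
    show "cp (mmul Z T R1 R1) {0,1,2,3} = 0" "cp (mmul Z T R2 R2) {0,1,2,3} = 0"
      using e11 e22 by simp_all
  qed
  then show ?thesis unfolding T_def .
qed


definition Iset :: "'k::field mat2 set" where "Iset = {Z \<in> centreF. gg Z = 0}"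

lemma mscale_mone_Falg: "mscale c mone \<in> Falg" by (rule Falg.scale[OF Falg.one])

lemma mzero_eq: "mzero = mscale 0 mone"
  by (simp add: mzero_def mscale_def sc_scale_def sc_zero_def fun_eq_iff)

lemma mzero_Falg: "mzero \<in> Falg" unfolding mzero_eq by (rule mscale_mone_Falg)

lemma mmul_zeroL: "goodM A \<Longrightarrow> mmul mzero A = mzero"
  by (simp add: mmul_def mzero_def sc_zeroL goodM_def sc_add_zeroL fun_eq_iff)
lemma mmul_zeroR: "goodM A \<Longrightarrow> mmul A mzero = mzero"
  by (simp add: mmul_def mzero_def sc_zeroR goodM_def sc_add_zeroL fun_eq_iff)

lemma gg_zero: "gg mzero = 0" by (simp add: gg_def mzero_def cp_zero)

lemma diff_zero_eq: "madd P (mscale (-1) Q) = mzero \<Longrightarrow> P = Q"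
proof -
  assume h: "madd P (mscale (-1) Q) = mzero"
  show "P = Q"
  proof (rule ext, rule ext, rule ext)
    fix i j u
    have "madd P (mscale (-1) Q) i j u = mzero i j u" using h by simp
    then show "P i j u = Q i j u" by (simp add: madd_def mscale_def sc_add_def sc_scale_def mzero_def sc_zero_def)
  qed
qed

lemma Iset_comm:
  assumes B: "B \<in> Iset" and A: "A \<in> Falg" and C: "C \<in> Falg"
  shows "mmul B (mmul A C) = mmul B (mmul C A)"
proof -
  have Bc: "B \<in> centreF" and g: "gg B = 0" using B by (auto simp: Iset_def)
  have gB: "goodM B" using Bc centre_Falg Falg_good by blast
  have gA: "goodM A" and gC: "goodM C" using A C by (simp_all add: Falg_good)
  have "mmul B (madd (mmul A C) (mscale (-1) (mmul C A))) = mzero" by (rule key_ZT[OF Bc g A C])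
  then have "madd (mmul B (mmul A C)) (mscale (-1) (mmul B (mmul C A))) = mzero"
    by (simp add: mmul_addR mmul_scaleR gB goodM_mul goodM_scale gA gC)
  then show ?thesis by (rule diff_zero_eq)
qed

lemma Iset_mulR:
  assumes B: "B \<in> Iset" and A: "A \<in> Falg"
  shows "mmul B A \<in> Iset"
proof -
  have Bc: "B \<in> centreF" and g: "gg B = 0" using B by (auto simp: Iset_def)
  have BF: "B \<in> Falg" using Bc by (rule centre_Falg)
  have gB: "goodM B" and gA: "goodM A" using BF A by (simp_all add: Falg_good)
  have BAF: "mmul B A \<in> Falg" using BF A by (rule Falg.mul)
  have "mmul (mmul B A) C = mmul C (mmul B A)" if C: "C \<in> Falg" for C
  proof -
    have gC: "goodM C" using C by (simp add: Falg_good)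
    have "mmul (mmul B A) C = mmul B (mmul A C)" by (simp add: mmul_assoc gA gB gC)
    also have "\<dots> = mmul B (mmul C A)" by (rule Iset_comm[OF B A C])
    also have "\<dots> = mmul (mmul B C) A" by (simp add: mmul_assoc gA gB gC)
    also have "\<dots> = mmul (mmul C B) A" using centre_comm[OF Bc C] by simp
    also have "\<dots> = mmul C (mmul B A)" by (simp add: mmul_assoc gA gB gC)
    finally show ?thesis .
  qed
  moreover have "gg (mmul B A) = 0"
    using g by (simp add: gg_mul Falg_shape BF A)
  ultimately show ?thesis using BAF by (simp add: Iset_def centreF_def)
qed

lemma ideal_Iset: "ideal_of_F (Iset :: 'k::field mat2 set)"
  unfolding ideal_of_F_def
proof (intro conjI ballI allI)
  show "Iset \<subseteq> Falg" by (auto simp: Iset_def centreF_def)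
  show "mzero \<in> Iset"
    by (simp add: Iset_def centreF_def mzero_Falg gg_zero mmul_zeroL mmul_zeroR Falg_good)
next
  fix A B :: "'k mat2" assume A: "A \<in> Iset" and B: "B \<in> Iset"
  then have AF: "A \<in> Falg" and BF: "B \<in> Falg" by (auto simp: Iset_def centreF_def)
  have gA: "goodM A" and gB: "goodM B" using AF BF by (simp_all add: Falg_good)
  show "madd A B \<in> Iset"
    using A B AF BF unfolding Iset_def centreF_def
    by (auto simp: Falg.add mmul_addL mmul_addR gA gB Falg_good data_add)
next
  fix c and A :: "'k mat2" assume A: "A \<in> Iset"
  then have AF: "A \<in> Falg" by (auto simp: Iset_def centreF_def)
  have gA: "goodM A" using AF by (simp add: Falg_good)
  show "mscale c A \<in> Iset"
    using A AF unfolding Iset_def centreF_def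
    by (auto simp: Falg.scale mmul_scaleL mmul_scaleR gA Falg_good data_scale)
next
  fix A B :: "'k mat2" assume A: "A \<in> Falg" and B: "B \<in> Iset"
  have Bc: "B \<in> centreF" using B by (simp add: Iset_def)
  show "mmul B A \<in> Iset" by (rule Iset_mulR[OF B A])
  then show "mmul A B \<in> Iset" using centre_comm[OF Bc A] by simp
qed


definition degM :: "nat \<Rightarrow> 'k::field mat2 \<Rightarrow> bool" where
  "degM k M \<longleftrightarrow> (\<forall>i j S. finite S \<and> card S < k \<longrightarrow> cp (M i j) S = 0)"

lemma degM_mul:
  assumes gA: "goodM A" and gB: "goodM B" and dA: "degM k A" and dB: "degM l B"
  shows "degM (k + l) (mmul A B)"
  unfolding degM_def
proof (intro allI impI, elim conjE)
  fix i j and S :: "nat set" assume S: "finite S" and c: "card S < k + l"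
  have z: "cp (A i m) S1 * cp (B m j) (S - S1) = 0" if S1: "S1 \<subseteq> S" for m S1
  proof -
    have "card S = card S1 + card (S - S1)" using S S1
      by (metis card_Diff_subset finite_subset add_diff_inverse_nat card_mono not_less)
    then have "card S1 < k \<or> card (S - S1) < l" using c by linarith
    moreover have "finite S1" using S S1 finite_subset by blast
    ultimately show ?thesis using dA dB S unfolding degM_def by auto
  qed
  show "cp (mmul A B i j) S = 0"
    unfolding cp_mmul[OF gA gB S] by (rule sum.neutral) (simp add: z)
qed

lemma degM_one: "degM 0 M" by (simp add: degM_def)

lemma Iset_deg: "Z \<in> Iset \<Longrightarrow> degM 1 Z"
proof -
  assume Z: "Z \<in> Iset"
  then have Zc: "Z \<in> centreF" and g: "gg Z = 0" by (auto simp: Iset_def)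
  have sZ: "shapeM Z" using Zc centre_Falg Falg_shape by blast
  have h: "hh Z = 0" using centre_data(1)[OF Zc] g by simp
  show ?thesis unfolding degM_def
  proof (intro allI impI, elim conjE)
    fix i j and S :: "nat set" assume "finite S" "card S < 1"
    then have S: "S = {}" by simp
    show "cp (Z i j) S = 0" unfolding S
      using g h shape_zero[OF sZ, of "{}"] by (cases i; cases j; simp add: gg_def hh_def wt_def)
  qed
qed

lemma mprod_Falg_deg:
  "set xs \<subseteq> Iset \<Longrightarrow> mprod xs \<in> Falg \<and> degM (length xs) (mprod xs)"
proof (induction xs)
  case Nil then show ?case by (simp add: mprod_def Falg.one degM_one)
next
  case (Cons x xs)
  then have x: "x \<in> Iset" and IH: "mprod xs \<in> Falg" "degM (length xs) (mprod xs)" by auto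
  have xF: "x \<in> Falg" using x by (auto simp: Iset_def centreF_def)
  have "mprod (x # xs) = mmul x (mprod xs)" by (simp add: mprod_def)
  moreover have "mmul x (mprod xs) \<in> Falg" using xF IH(1) by (rule Falg.mul)
  moreover have "degM (1 + length xs) (mmul x (mprod xs))"
    by (rule degM_mul) (simp_all add: Falg_good xF IH Iset_deg[OF x, simplified])
  ultimately show ?case by simp
qed

lemma nilp_Iset: "nilpotent_set (Iset :: 'k::field mat2 set)"
  unfolding nilpotent_set_def
proof (intro exI[of _ 5] conjI allI impI)
  fix xs :: "'k mat2 list" assume h: "length xs = 5 \<and> set xs \<subseteq> Iset"
  then have F: "mprod xs \<in> Falg" and d: "degM 5 (mprod xs)" using mprod_Falg_deg by fastforce+
  have sM: "shapeM (mprod xs)" using F by (rule Falg_shape)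
  have gM: "goodM (mprod xs)" using F by (rule Falg_good)
  show "mprod xs = mzero"
  proof (rule ext, rule ext)
    fix i j
    show "mprod xs i j = mzero i j" unfolding mzero_def
    proof (rule good_ext)
      show "good (mprod xs i j)" using gM by (simp add: goodM_def)
      show "good sc_zero" by (rule good_zero)
      fix S :: "nat set" assume S: "finite S"
      show "cp (mprod xs i j) S = cp sc_zero S"
      proof (cases "card S < 5")
        case True then show ?thesis using d S by (simp add: degM_def cp_zero)
      next
        case False
        have "\<not> S \<subseteq> {0,1,2,3}"
        proof
          assume "S \<subseteq> {0,1,2,3}"
          then have "card S \<le> card {0,1,2,3::nat}" by (rule card_mono[rotated]) simp
          then show False using False by simp
        qed
        then show ?thesis using shape_zero[OF sM S] by (simp add: cp_zero)
      qed
    qed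
  qed
qed simp


lemma cst_eq_0: "cst c = (0 :: 'k::field pl) \<Longrightarrow> c = 0"
  unfolding cst_def by (metis lookup_single_eq lookup_zero)

lemma centre_decomp:
  fixes Z :: "'k::field mat2"
  assumes Zc: "Z \<in> centreF"
  shows "\<exists>c A. Z = madd (mscale c mone) A \<and> A \<in> Iset"
proof -
  define c where "c = Poly_Mapping.lookup (gg Z) 0"
  define A where "A = madd Z (mscale (-c) mone)"
  have ZF: "Z \<in> Falg" using Zc by (rule centre_Falg)
  have gZ: "goodM Z" using ZF by (rule Falg_good)
  have AF: "A \<in> Falg" unfolding A_def using ZF mscale_mone_Falg by (rule Falg.add)
  have "mmul A B = mmul B A" if B: "B \<in> Falg" for B
  proof -
    have gB: "goodM B" using B by (rule Falg_good)
    have "mmul A B = madd (mmul Z B) (mscale (-c) B)"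
      unfolding A_def by (simp add: mmul_addL mmul_scaleL gZ gB goodM_scale goodM_one mmul_oneL)
    also have "\<dots> = madd (mmul B Z) (mscale (-c) B)" using centre_comm[OF Zc B] by simp
    also have "\<dots> = mmul B A"
      unfolding A_def by (simp add: mmul_addR mmul_scaleR gZ gB goodM_scale goodM_one mmul_oneR)
    finally show ?thesis .
  qed
  moreover have "gg A = 0"
    unfolding A_def using centre_data(6)[OF Zc]
    by (simp add: data_add gZ goodM_scale goodM_one data_scale data_one c_def cst_uminus)
  ultimately have "A \<in> Iset" using AF by (simp add: Iset_def centreF_def)
  moreover have "Z = madd (mscale c mone) A"
    unfolding A_def by (simp add: madd_def mscale_def sc_add_def sc_scale_def fun_eq_iff algebra_simps)
  ultimately show ?thesis by blast
qed

lemma decomp_centre: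
  fixes A :: "'k::field mat2"
  assumes A: "A \<in> Iset"
  shows "madd (mscale c mone) A \<in> centreF"
proof -
  have Ac: "A \<in> centreF" using A by (simp add: Iset_def)
  have AF: "A \<in> Falg" using Ac by (rule centre_Falg)
  have gA: "goodM A" using AF by (rule Falg_good)
  have F: "madd (mscale c mone) A \<in> Falg" using mscale_mone_Falg AF by (rule Falg.add)
  have "mmul (madd (mscale c mone) A) B = mmul B (madd (mscale c mone) A)" if B: "B \<in> Falg" for B
  proof -
    have gB: "goodM B" using B by (rule Falg_good)
    have "mmul (madd (mscale c mone) A) B = madd (mscale c B) (mmul A B)"
      by (simp add: mmul_addL mmul_scaleL gA gB goodM_scale goodM_one mmul_oneL)
    also have "\<dots> = madd (mscale c B) (mmul B A)" using centre_comm[OF Ac B] by simp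
    also have "\<dots> = mmul B (madd (mscale c mone) A)"
      by (simp add: mmul_addR mmul_scaleR gA gB goodM_scale goodM_one mmul_oneR)
    finally show ?thesis .
  qed
  then show ?thesis using F by (simp add: centreF_def)
qed

theorem corollary2:
  fixes dummy :: "'k::field"
  assumes "(2::'k) \<noteq> 0"
    and "infinite (UNIV :: 'k set)"
  shows "\<exists>I :: 'k mat2 set. ideal_of_F I \<and> nilpotent_set I
     \<and> centreF = {madd (mscale c mone) A | c A. A \<in> I}
     \<and> (\<forall>c. mscale c mone \<in> I \<longrightarrow> c = 0)"
proof (intro exI[of _ "Iset :: 'k mat2 set"] conjI allI impI)
  show "ideal_of_F (Iset :: 'k mat2 set)" by (rule ideal_Iset)
  show "nilpotent_set (Iset :: 'k mat2 set)" by (rule nilp_Iset)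
  show "centreF = {madd (mscale c mone) A | c A. A \<in> (Iset :: 'k mat2 set)}"
    using centre_decomp decomp_centre by blast
next
  fix c :: 'k assume "mscale c mone \<in> (Iset :: 'k mat2 set)"
  then have "gg (mscale c (mone :: 'k mat2)) = 0" by (simp add: Iset_def)
  then have "cst c = (0 :: 'k pl)" by (simp add: data_scale goodM_one data_one)
  then show "c = 0" by (rule cst_eq_0)
qed


end
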